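(* For all blueprints $\alpha,\beta,\beta'$: if $\alpha\Uparrow\beta$ and $\beta\sqsubseteq_1\beta'$, then there exists a blueprint $\alpha'$ such that $\alpha\sqsubseteq_1\alpha'$ and $\alpha'\Uparrow\beta'$.
   Context: Addresses are finite sequences of positive integers with prefix order $\le$ ($<$ strict), concatenation $\cdot$, empty address $\varepsilon$. A partial tree is a function on a set of addresses; $\pi|_a$ is $c\mapsto\pi(a\cdot c)$; $\pi[a\leftarrow\pi']$ is the partial tree $\pi''$ with $\pi''|_a=\pi'$ and $\pi''(b)=\pi(b)$ for $b\in\mathrm{dom}(\pi)$ with $a\not\le b$. $\mathfrak S$ consists of all formulas (arity 0) and symbols $@_\phi$ (arity 2). A blueprint is a finite partial tree with values in $\mathfrak S$ such that if $\alpha(a)=@_\phi$ then $\alpha|_{a\cdot(1)},\alpha|_{a\cdot(2)}$ are non-empty. Notation: $\emptyset_{\mathbb B}$ empty blueprint; $\phi$ denotes $\varepsilon\mapsto\phi$; $@_\phi(\alpha_1,\alpha_2)$ ($\alpha_i$ non-empty) has root $@_\phi$ and $\alpha_i$ at $(i)$; for pairwise incomparable $\bar a=(a_1,\dots,a_k)$, $*_{\bar a}(\alpha_1,\dots,\alpha_k)$ is the blueprint of minimal domain whose restriction at $a_i$ is $\alpha_i$. $\Uparrow$ is the least reflexive transitive relation with $\beta[a\leftarrow\beta|_b]\Uparrow\beta$ whenever $a,b\in\mathrm{dom}(\beta)$, $a<b$, $\beta(a)=\beta(b)$. $\equiv$ is the least relation with: $\emptyset_{\mathbb B}\equiv\emptyset_{\mathbb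 B}$; $\phi\equiv\phi$; $@_\phi(\alpha_1,\alpha_2)\equiv@_\phi(\beta_1,\beta_2)$ if $\alpha_i\equiv\beta_i$; $*_{\bar a}(\alpha_1,\dots,\alpha_n)\equiv*_{\bar b}(\beta_1,\dots,\beta_n)$ if $\alpha_i\equiv\beta_i$ for all $i$ (with $\bar a,\bar b$ pairwise-incomparable sequences of length $n$, not both $(\varepsilon)$, and some $\alpha_i,\beta_i$ non-empty). $\curvearrowleft_m$ is the least relation with: (1) if $\gamma_1\equiv\dots\equiv\gamma_{m+1}\not\equiv\emptyset_{\mathbb B}$ then $*_{\bar a}(\gamma_1,\dots,\gamma_m)\curvearrowleft_m*_{\bar a\cdot(b)}(\gamma_1,\dots,\gamma_{m+1})$; (2) if $\alpha=*_{\bar a}(\alpha_1,\dots,\alpha_n)$, $\beta=*_{\bar b}(\beta_1,\dots,\beta_p)$, $\alpha\curvearrowleft_m\beta$, $\gamma$ non-empty, then $@_\phi(\alpha,\gamma)\curvearrowleft_m@_\phi(\beta,\gamma)$, $@_\phi(\gamma,\alpha)\curvearrowleft_m@_\phi(\gamma,\beta)$, $*_{\bar a\cdot(c)}(\alpha_1,\dots,\alpha_n,\gamma)\curvearrowleft_m*_{\bar b\cdot(c)}(\beta_1,\dots,\beta_p,\gamma)$. $\sqsubseteq_m$ is the reflexive transitive closure of $\equiv\cup\curvearrowleft_m$. *)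

theory Defs
  imports Main "HOL-Library.Sublist"
begin

text \<open>Prefix order is Sublist.prefix, strict order strict_prefix,
  concatenation is list append, the empty address is the empty list.\<close>

type_synonym addr = "nat list"

definition is_addr :: "addr \<Rightarrow> bool" where
  "is_addr a = (\<forall>i\<in>set a. 0 < i)"

text \<open>Symbols: formulas (arity 0, type parameter 'f) and application symbols At phi (arity 2).\<close>
datatype 'f sym = Fm 'f | At 'f

type_synonym 'f ptree = "addr \<Rightarrow> 'f sym option"

definition restr :: "'f ptree \<Rightarrow> addr \<Rightarrow> 'f ptree" where
  "restr \<pi> a = (\<lambda>c. \<pi> (a @ c))"

definition graft :: "'f ptree \<Rightarrow> addr \<Rightarrow> 'f ptree \<Rightarrow> 'f ptree" where
  "graft \<pi> a \<pi>' = (\<lambda>b. if prefix a b then \<pi>' (drop (length a) b) else \<pi> b)"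

definition blueprint :: "'f ptree \<Rightarrow> bool" where
  "blueprint \<alpha> \<longleftrightarrow> finite (dom \<alpha>) \<and> (\<forall>a\<in>dom \<alpha>. is_addr a) \<and>
     (\<forall>a \<phi>. \<alpha> a = Some (At \<phi>) \<longrightarrow>
        restr \<alpha> (a @ [1]) \<noteq> Map.empty \<and> restr \<alpha> (a @ [2]) \<noteq> Map.empty)"

definition leaf :: "'f \<Rightarrow> 'f ptree" where
  "leaf \<phi> = [[] \<mapsto> Fm \<phi>]"

definition app :: "'f \<Rightarrow> 'f ptree \<Rightarrow> 'f ptree \<Rightarrow> 'f ptree" where
  "app \<phi> \<alpha>1 \<alpha>2 = (\<lambda>d. case d of [] \<Rightarrow> Some (At \<phi>)
       | (i # c) \<Rightarrow> (if i = 1 then \<alpha>1 c else if i = 2 then \<alpha>2 c else None))"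

definition pw_incomp :: "addr list \<Rightarrow> bool" where
  "pw_incomp as \<longleftrightarrow> (\<forall>i<length as. \<forall>j<length as. i \<noteq> j \<longrightarrow> \<not> prefix (as ! i) (as ! j))"

text \<open>*_as(als): minimal-domain partial tree whose restriction at as!i is als!i
  (well-behaved when as is pairwise incomparable and of the same length as als).\<close>
fun starz :: "(addr \<times> 'f ptree) list \<Rightarrow> 'f ptree" where
  "starz [] = Map.empty"
| "starz ((a, \<alpha>) # rest) = (\<lambda>d. if prefix a d then \<alpha> (drop (length a) d) else starz rest d)"

definition star :: "addr list \<Rightarrow> 'f ptree list \<Rightarrow> 'f ptree" where
  "star as als = starz (zip as als)"

inductive up :: "'f ptree \<Rightarrow> 'f ptree \<Rightarrow> bool" where
  up_refl: "blueprint \<beta> \<Longrightarrow> up \<beta> \<beta>"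
| up_step: "blueprint \<beta> \<Longrightarrow> a \<in> dom \<beta> \<Longrightarrow> b \<in> dom \<beta> \<Longrightarrow> strict_prefix a b \<Longrightarrow>
    \<beta> a = \<beta> b \<Longrightarrow> up (graft \<beta> a (restr \<beta> b)) \<beta>"
| up_trans: "up x y \<Longrightarrow> up y z \<Longrightarrow> up x z"

inductive eqv :: "'f ptree \<Rightarrow> 'f ptree \<Rightarrow> bool" where
  eqv_empty: "eqv Map.empty Map.empty"
| eqv_leaf: "eqv (leaf \<phi>) (leaf \<phi>)"
| eqv_app: "eqv \<alpha>1 \<beta>1 \<Longrightarrow> eqv \<alpha>2 \<beta>2 \<Longrightarrow> \<alpha>1 \<noteq> Map.empty \<Longrightarrow> \<alpha>2 \<noteq> Map.empty \<Longrightarrow>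
    \<beta>1 \<noteq> Map.empty \<Longrightarrow> \<beta>2 \<noteq> Map.empty \<Longrightarrow> eqv (app \<phi> \<alpha>1 \<alpha>2) (app \<phi> \<beta>1 \<beta>2)"
| eqv_star: "length as = n \<Longrightarrow> length bs = n \<Longrightarrow> length als = n \<Longrightarrow> length bes = n \<Longrightarrow>
    pw_incomp as \<Longrightarrow> pw_incomp bs \<Longrightarrow> (\<forall>a\<in>set as. is_addr a) \<Longrightarrow> (\<forall>b\<in>set bs. is_addr b) \<Longrightarrow>
    \<not> (as = [[]] \<and> bs = [[]]) \<Longrightarrow>
    (\<forall>i<n. eqv (als ! i) (bes ! i)) \<Longrightarrow>
    (\<exists>i<n. als ! i \<noteq> Map.empty \<and> bes ! i \<noteq> Map.empty) \<Longrightarrow>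
    eqv (star as als) (star bs bes)"

inductive curv :: "nat \<Rightarrow> 'f ptree \<Rightarrow> 'f ptree \<Rightarrow> bool" for m :: nat where
  curv_base: "length as = m \<Longrightarrow> length gs = Suc m \<Longrightarrow> (\<forall>g\<in>set gs. blueprint g) \<Longrightarrow>
    pw_incomp (as @ [b]) \<Longrightarrow> (\<forall>a\<in>set (as @ [b]). is_addr a) \<Longrightarrow>
    (\<forall>i<m. eqv (gs ! i) (gs ! Suc i)) \<Longrightarrow> \<not> eqv (gs ! m) Map.empty \<Longrightarrow>
    curv m (star as (take m gs)) (star (as @ [b]) gs)"
| curv_app1: "curv m \<alpha> \<beta> \<Longrightarrow> \<alpha> \<noteq> Map.empty \<Longrightarrow> \<beta> \<noteq> Map.empty \<Longrightarrow>
    blueprint \<gamma> \<Longrightarrow> \<gamma> \<noteq> Map.empty \<Longrightarrow> curv m (app \<phi> \<alpha> \<gamma>) (app \<phi> \<beta> \<gamma>)"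
| curv_app2: "curv m \<alpha> \<beta> \<Longrightarrow> \<alpha> \<noteq> Map.empty \<Longrightarrow> \<beta> \<noteq> Map.empty \<Longrightarrow>
    blueprint \<gamma> \<Longrightarrow> \<gamma> \<noteq> Map.empty \<Longrightarrow> curv m (app \<phi> \<gamma> \<alpha>) (app \<phi> \<gamma> \<beta>)"
| curv_star: "curv m (star as als) (star bs bes) \<Longrightarrow>
    length as = length als \<Longrightarrow> length bs = length bes \<Longrightarrow>
    (\<forall>x\<in>set als. blueprint x) \<Longrightarrow> (\<forall>x\<in>set bes. blueprint x) \<Longrightarrow>
    pw_incomp (as @ [c]) \<Longrightarrow> pw_incomp (bs @ [c]) \<Longrightarrow>
    (\<forall>a\<in>set (as @ [c]). is_addr a) \<Longrightarrow> (\<forall>b\<in>set (bs @ [c]). is_addr b) \<Longrightarrow>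
    blueprint \<gamma> \<Longrightarrow> \<gamma> \<noteq> Map.empty \<Longrightarrow>
    curv m (star (as @ [c]) (als @ [\<gamma>])) (star (bs @ [c]) (bes @ [\<gamma>]))"

definition sq :: "nat \<Rightarrow> 'f ptree \<Rightarrow> 'f ptree \<Rightarrow> bool" where
  "sq m = (\<lambda>x y. eqv x y \<or> curv m x y)\<^sup>*\<^sup>*"

end

theory Submission imports Defs begin

definition contr :: "'f ptree \<Rightarrow> addr \<Rightarrow> addr \<Rightarrow> 'f ptree" where
  "contr \<pi> a b = graft \<pi> a (restr \<pi> b)"

lemma restr_Nil[simp]: "restr \<pi> [] = \<pi>"
  by (simp add: restr_def)

lemma restr_restr: "restr (restr \<pi> a) b = restr \<pi> (a @ b)"
  by (simp add: restr_def)

lemma graft_Nil[simp]: "graft \<pi> [] \<pi>' = \<pi>'"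
  by (simp add: graft_def)

lemma restr_graft_same[simp]: "restr (graft \<pi> a \<pi>') a = \<pi>'"
  by (simp add: restr_def graft_def)

lemma graft_graft_same[simp]: "graft (graft \<pi> a \<pi>1) a \<pi>2 = graft \<pi> a \<pi>2"
  by (auto simp: graft_def)

lemma graft_restr_same[simp]: "graft \<pi> a (restr \<pi> a) = \<pi>"
  by (rule ext) (auto simp: graft_def restr_def prefix_def)

lemma graft_append: "graft \<pi> (c @ a) r = graft \<pi> c (graft (restr \<pi> c) a r)"
proof
  fix d
  show "graft \<pi> (c @ a) r d = graft \<pi> c (graft (restr \<pi> c) a r) d"
    by (auto simp: graft_def restr_def prefix_def)
qed

lemma contr_append: "contr \<pi> (c @ a) (c @ b) = graft \<pi> c (contr (restr \<pi> c) a b)"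
  by (simp add: contr_def graft_append restr_restr)

lemma graft_at: "graft \<pi> a \<pi>' (a @ d) = \<pi>' d"
  by (simp add: graft_def)

lemma contr_at: "contr \<pi> a b (a @ d) = \<pi> (b @ d)"
  by (simp add: contr_def graft_def restr_def)

lemma is_addr_append[simp]: "is_addr (a @ b) \<longleftrightarrow> is_addr a \<and> is_addr b"
  by (auto simp: is_addr_def)

lemma is_addr_Nil[simp]: "is_addr []"
  by (simp add: is_addr_def)

lemma incomp_prefix:
  assumes "prefix e d" "\<not> prefix c e" "\<not> prefix e c"
  shows "\<not> prefix c d"
  using assms prefix_same_cases by blast

lemma starz_match:
  "(a, x) \<in> set l \<Longrightarrow> prefix a d \<Longrightarrow> (\<forall>(a', x')\<in>set l. prefix a' d \<longrightarrow> (a', x') = (a, x))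
   \<Longrightarrow> starz l d = x (drop (length a) d)"
  by (induction l rule: starz.induct) auto

lemma starz_none: "(\<forall>(a, x)\<in>set l. \<not> prefix a d) \<Longrightarrow> starz l d = None"
  by (induction l rule: starz.induct) auto

lemma pw_incompD: "pw_incomp as \<Longrightarrow> i < length as \<Longrightarrow> j < length as \<Longrightarrow> prefix (as ! i) (as ! j) \<Longrightarrow> i = j"
  unfolding pw_incomp_def by blast

lemma star_at:
  assumes "pw_incomp as" "length als = length as" "i < length as"
  shows "star as als (as ! i @ d) = (als ! i) d"
proof -
  have "starz (zip as als) (as ! i @ d) = (als ! i) (drop (length (as ! i)) (as ! i @ d))"
  proof (rule starz_match)
    show "(as ! i, als ! i) \<in> set (zip as als)" using assms by (auto simp: set_zip)
    show "prefix (as ! i) (as ! i @ d)" by simp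
    show "\<forall>(a', x')\<in>set (zip as als). prefix a' (as ! i @ d) \<longrightarrow> (a', x') = (as ! i, als ! i)"
    proof (clarsimp simp: set_zip)
      fix j assume j: "j < length as" "j < length als" "prefix (as ! j) (as ! i @ d)"
      have "prefix (as ! j) (as ! i) \<or> prefix (as ! i) (as ! j)"
        using j(3) prefix_same_cases[of "as ! j" "as ! i @ d" "as ! i"] by simp
      then have "i = j" using pw_incompD[OF assms(1)] j assms(3) by metis
      then show "as ! j = as ! i \<and> als ! j = als ! i" by simp
    qed
  qed
  then show ?thesis by (simp add: star_def)
qed

lemma star_outside:
  assumes "\<forall>i<length as. \<not> prefix (as ! i) d"
  shows "star as als d = None"
  unfolding star_def using assms by (intro starz_none) (auto simp: set_zip)

lemma star_dom:
  assumes "pw_incomp as" "length als = length as" "star as als d = Some s"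
  shows "\<exists>i<length as. \<exists>e. d = as ! i @ e \<and> (als ! i) e = Some s"
proof -
  obtain i where i: "i < length as" "prefix (as ! i) d"
    using star_outside[of as d als] assms(3) by auto
  then obtain e where "d = as ! i @ e" by (auto simp: prefix_def)
  with star_at[OF assms(1,2) i(1)] assms(3) i show ?thesis by auto
qed

lemma restr_star:
  assumes "pw_incomp as" "length als = length as" "i < length as"
  shows "restr (star as als) (as ! i) = als ! i"
  using star_at[OF assms] by (auto simp: restr_def)

lemma star_ext:
  assumes "pw_incomp as" "length als = length as" "length bes = length as"
    and "\<And>i e. i < length as \<Longrightarrow> (als ! i) e = (bes ! i) e"
  shows "star as als = star as bes"
proof
  fix d
  show "star as als d = star as bes d"
  proof (cases "\<exists>i<length as. prefix (as ! i) d")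
    case True
    then obtain i e where ie: "i < length as" "d = as ! i @ e" by (auto simp: prefix_def)
    have "star as als (as ! i @ e) = (als ! i) e" using star_at[OF assms(1,2) ie(1)] .
    moreover have "star as bes (as ! i @ e) = (bes ! i) e" using star_at[OF assms(1,3) ie(1)] .
    ultimately show ?thesis using ie assms(4) by simp
  next
    case False
    then show ?thesis by (simp add: star_outside)
  qed
qed

lemma star_update:
  assumes "pw_incomp as" "length als = length as" "i < length as"
  shows "graft (star as als) (as ! i) u = star as (als[i := u])"
proof
  fix d
  have l: "length (als[i := u]) = length as" using assms by simp
  show "graft (star as als) (as ! i) u d = star as (als[i := u]) d"
  proof (cases "\<exists>j<length as. prefix (as ! j) d")
    case True
    then obtain j e where j: "j < length as" "d = as ! j @ e" by (auto simp: prefix_def)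
    have s2: "star as (als[i := u]) (as ! j @ e) = (als[i := u] ! j) e"
      using star_at[OF assms(1) l j(1)] .
    show ?thesis
    proof (cases "j = i")
      case True
      have d: "d = as ! i @ e" using j True by simp
      have "als[i := u] ! j = u" using True assms(2,3) by simp
      then have "star as (als[i := u]) d = u e" using s2 d True by simp
      moreover have "graft (star as als) (as ! i) u d = u e" using d by (simp only: graft_at)
      ultimately show ?thesis by simp
    next
      case False
      have np: "\<not> prefix (as ! i) d"
      proof
        assume "prefix (as ! i) d"
        moreover have "prefix (as ! j) d" using j by simp
        ultimately have "prefix (as ! i) (as ! j) \<or> prefix (as ! j) (as ! i)"
          using prefix_same_cases by blast
        then show False
        proof
          assume "prefix (as ! i) (as ! j)"
          then have "i = j" by (rule pw_incompD[OF assms(1) assms(3) j(1)])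
          with False show False by simp
        next
          assume "prefix (as ! j) (as ! i)"
          then have "j = i" by (rule pw_incompD[OF assms(1) j(1) assms(3)])
          with False show False by simp
        qed
      qed
      have s1: "star as als (as ! j @ e) = (als ! j) e"
        using star_at[OF assms(1,2) j(1)] .
      have "graft (star as als) (as ! i) u d = star as als d" using np by (simp add: graft_def)
      then show ?thesis using j s1 s2 False by simp
    qed
  next
    case False
    then have "\<not> prefix (as ! i) d" using assms(3) by blast
    then show ?thesis using False by (simp add: star_outside graft_def)
  qed
qed

lemma pw_incomp_snoc:
  assumes "pw_incomp (as @ [c])"
  shows "pw_incomp as" "\<forall>e\<in>set as. \<not> prefix e c \<and> \<not> prefix c e"
proof -
  have A: "\<And>i j. i < Suc (length as) \<Longrightarrow> j < Suc (length as) \<Longrightarrow> i \<noteq> j \<Longrightarrow>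
     \<not> prefix ((as @ [c]) ! i) ((as @ [c]) ! j)"
    using assms unfolding pw_incomp_def by simp
  have N: "\<And>i. i < length as \<Longrightarrow> (as @ [c]) ! i = as ! i" by (simp add: nth_append)
  have L: "(as @ [c]) ! length as = c" by simp
  show "pw_incomp as" unfolding pw_incomp_def
  proof (intro allI impI)
    fix i j assume ij: "i < length as" "j < length as" "i \<noteq> j"
    have "\<not> prefix ((as @ [c]) ! i) ((as @ [c]) ! j)" using A[of i j] ij by linarith
    then show "\<not> prefix (as ! i) (as ! j)" using N[OF ij(1)] N[OF ij(2)] by simp
  qed
  show "\<forall>e\<in>set as. \<not> prefix e c \<and> \<not> prefix c e"
  proof
    fix e assume "e \<in> set as"
    then obtain i where i: "i < length as" "e = as ! i" by (auto simp: in_set_conv_nth)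
    have "\<not> prefix ((as @ [c]) ! i) ((as @ [c]) ! length as)" using A[of i "length as"] i by linarith
    moreover have "\<not> prefix ((as @ [c]) ! length as) ((as @ [c]) ! i)" using A[of "length as" i] i by linarith
    ultimately show "\<not> prefix e c \<and> \<not> prefix c e" using N[OF i(1)] L i(2) by simp
  qed
qed

lemma star_snoc:
  assumes "pw_incomp (as @ [c])" "length als = length as"
  shows "star (as @ [c]) (als @ [\<gamma>]) = graft (star as als) c \<gamma>"
proof
  fix d
  have pa: "pw_incomp as" and inc: "\<forall>e\<in>set as. \<not> prefix e c \<and> \<not> prefix c e"
    using pw_incomp_snoc[OF assms(1)] by auto
  have l: "length (als @ [\<gamma>]) = length (as @ [c])" using assms by simp
  show "star (as @ [c]) (als @ [\<gamma>]) d = graft (star as als) c \<gamma> d"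
  proof (cases "prefix c d")
    case True
    then obtain e where e: "d = c @ e" by (auto simp: prefix_def)
    have "star (as @ [c]) (als @ [\<gamma>]) ((as @ [c]) ! length as @ e) = ((als @ [\<gamma>]) ! length as) e"
      using star_at[OF assms(1) l, of "length as" e] by simp
    moreover have "(as @ [c]) ! length as = c" by simp
    moreover have "(als @ [\<gamma>]) ! length as = \<gamma>" using assms(2) by (metis nth_append_length)
    moreover have "graft (star as als) c \<gamma> d = \<gamma> e" using e by (simp add: graft_at)
    ultimately show ?thesis using e by simp
  next
    case False
    have g: "graft (star as als) c \<gamma> d = star as als d" using False by (simp add: graft_def)
    show ?thesis
    proof (cases "\<exists>j<length as. prefix (as ! j) d")
      case True
      then obtain j e where j: "j < length as" "d = as ! j @ e" by (auto simp: prefix_def)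
      have 1: "star (as @ [c]) (als @ [\<gamma>]) ((as @ [c]) ! j @ e) = ((als @ [\<gamma>]) ! j) e"
        using star_at[OF assms(1) l, of j e] j by simp
      have 2: "(as @ [c]) ! j = as ! j" using j by (simp add: nth_append)
      have 3: "(als @ [\<gamma>]) ! j = als ! j" using j assms(2) by (simp add: nth_append)
      have 4: "star as als (as ! j @ e) = (als ! j) e" using star_at[OF pa assms(2) j(1)] .
      show ?thesis using 1 2 3 4 g j(2) by simp
    next
      case f2: False
      have "\<forall>i<length (as @ [c]). \<not> prefix ((as @ [c]) ! i) d"
      proof (intro allI impI)
        fix i assume "i < length (as @ [c])"
        then have "i < length as \<or> i = length as" by auto
        then show "\<not> prefix ((as @ [c]) ! i) d"
        proof
          assume "i < length as" then show ?thesis using f2 by (simp add: nth_append)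
        next
          assume "i = length as" then show ?thesis using False by simp
        qed
      qed
      then have "star (as @ [c]) (als @ [\<gamma>]) d = None" by (rule star_outside)
      moreover have "star as als d = None" using f2 by (simp add: star_outside)
      ultimately show ?thesis using g by simp
    qed
  qed
qed

lemma prefix_drop_eq[simp]: "prefix a d \<Longrightarrow> a @ drop (length a) d = d"
  by (auto simp: prefix_def)

lemma starz_repr_aux:
  "starz (zip as (map (restr u) as)) d = (if \<exists>e\<in>set as. prefix e d then u d else None)"
  by (induction as) (auto simp: restr_def)

lemma star_repr:
  assumes "\<forall>d\<in>dom u. \<exists>e\<in>set as. prefix e d"
  shows "u = star as (map (restr u) as)"
proof
  fix d show "u d = star as (map (restr u) as) d"
    using assms by (auto simp: star_def starz_repr_aux)
qed

lemma app_Nil[simp]: "app \<phi> u v [] = Some (At \<phi>)"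
  by (simp add: app_def)
lemma app_1[simp]: "app \<phi> u v (Suc 0 # c) = u c"
  by (simp add: app_def)
lemma app_1'[simp]: "app \<phi> u v (1 # c) = u c"
  by (simp add: app_def)
lemma app_2[simp]: "app \<phi> u v (2 # c) = v c"
  by (simp add: app_def)
lemma app_2': "app \<phi> u v (2 # c) = v c"
  by (simp add: app_def)
lemma app_other: "i \<noteq> 1 \<Longrightarrow> i \<noteq> 2 \<Longrightarrow> app \<phi> u v (i # c) = None"
  by (simp add: app_def)

lemma restr_app1[simp]: "restr (app \<phi> u v) (1 # e) = restr u e"
  unfolding restr_def by (rule ext) (simp only: append_Cons app_1')
lemma restr_app1'[simp]: "restr (app \<phi> u v) (Suc 0 # e) = restr u e"
  unfolding restr_def by (rule ext) (simp only: append_Cons app_1)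
lemma restr_app2[simp]: "restr (app \<phi> u v) (2 # e) = restr v e"
  unfolding restr_def by (rule ext) (simp only: append_Cons app_2)

lemma app_graft1: "graft (app \<phi> u v) [1] w = app \<phi> w v"
proof
  fix d show "graft (app \<phi> u v) [1] w d = app \<phi> w v d"
  proof (cases d)
    case Nil then show ?thesis by (simp add: graft_def)
  next
    case (Cons i c)
    show ?thesis
    proof (cases "i = 1")
      case True then show ?thesis using Cons by (simp add: graft_def)
    next
      case False
      then have "\<not> prefix [1] d" using Cons by simp
      then show ?thesis using Cons False by (simp add: graft_def app_def)
    qed
  qed
qed

lemma app_graft2: "graft (app \<phi> u v) [2] w = app \<phi> u w"
proof
  fix d show "graft (app \<phi> u v) [2] w d = app \<phi> u w d"
  proof (cases d)
    case Nil then show ?thesis by (simp add: graft_def)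
  next
    case (Cons i c)
    show ?thesis
    proof (cases "i = 2")
      case True then show ?thesis using Cons by (simp add: graft_def)
    next
      case False
      then have "\<not> prefix [2] d" using Cons by simp
      then show ?thesis using Cons False by (simp add: graft_def app_def)
    qed
  qed
qed

lemma app_dom:
  assumes "app \<phi> u v d = Some s"
  shows "d = [] \<or> (\<exists>e. d = 1 # e \<and> u e = Some s) \<or> (\<exists>e. d = 2 # e \<and> v e = Some s)"
proof (cases d)
  case (Cons i c)
  then show ?thesis using assms by (cases "i = 1"; cases "i = 2") (simp_all add: app_other)
qed simp

lemma app_dom_ne:
  assumes "d \<noteq> []" "app \<phi> u v d = Some s"
  shows "(\<exists>e. d = 1 # e \<and> u e = Some s) \<or> (\<exists>e. d = 2 # e \<and> v e = Some s)"
  using app_dom[OF assms(2)] assms(1) by simp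

lemma app_nonempty[simp]: "app \<phi> u v \<noteq> Map.empty"
proof
  assume "app \<phi> u v = Map.empty"
  then have "app \<phi> u v [] = None" by simp
  then show False by simp
qed

section \<open>blueprints\<close>

lemma blueprint_addr': "d \<in> dom \<pi> \<Longrightarrow> blueprint \<pi> \<Longrightarrow> is_addr d"
  unfolding blueprint_def by blast

lemma blueprint_addr: "blueprint \<pi> \<Longrightarrow> \<pi> d = Some s \<Longrightarrow> is_addr d"
  using blueprint_addr' by blast

lemma blueprint_At: "blueprint \<pi> \<Longrightarrow> \<pi> d = Some (At \<phi>) \<Longrightarrow>
    restr \<pi> (d @ [1]) \<noteq> Map.empty \<and> restr \<pi> (d @ [2]) \<noteq> Map.empty"
  unfolding blueprint_def by blast

lemma nonempty_ex: "f \<noteq> Map.empty \<Longrightarrow> \<exists>k. f k \<noteq> None"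
  by (rule ccontr) (auto intro!: ext)

lemma blueprint_intro:
  assumes "finite (dom \<pi>)" "\<And>d. d \<in> dom \<pi> \<Longrightarrow> is_addr d"
    "\<And>d \<phi> (k::nat). \<pi> d = Some (At \<phi>) \<Longrightarrow> k = 1 \<or> k = 2 \<Longrightarrow> restr \<pi> (d @ [k]) \<noteq> Map.empty"
  shows "blueprint \<pi>"
  unfolding blueprint_def using assms by blast

lemma blueprint_restr:
  assumes "blueprint \<pi>"
  shows "blueprint (restr \<pi> a)"
proof (rule blueprint_intro)
  have "dom (restr \<pi> a) = (\<lambda>c. a @ c) -` dom \<pi>" by (auto simp: restr_def)
  moreover have "finite (dom \<pi>)" using assms by (simp add: blueprint_def)
  ultimately show "finite (dom (restr \<pi> a))"
    by (simp add: finite_vimageI inj_on_def)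
next
  fix c assume "c \<in> dom (restr \<pi> a)"
  then have "a @ c \<in> dom \<pi>" by (auto simp: restr_def)
  then have "is_addr (a @ c)" using assms by (rule blueprint_addr')
  then show "is_addr c" by simp
next
  fix c \<phi> and k :: nat assume "restr \<pi> a c = Some (At \<phi>)" "k = 1 \<or> k = 2"
  then have "\<pi> (a @ c) = Some (At \<phi>)" by (simp add: restr_def)
  from blueprint_At[OF assms this] \<open>k = 1 \<or> k = 2\<close>
  show "restr (restr \<pi> a) (c @ [k]) \<noteq> Map.empty"
    by (auto simp: restr_restr)
qed

lemma blueprint_empty[simp]: "blueprint Map.empty"
  by (simp add: blueprint_def)

lemma blueprint_leaf[simp]: "blueprint (leaf \<phi>)"
  by (simp add: blueprint_def leaf_def)

lemma is_addr_Cons[simp]: "is_addr (i # e) \<longleftrightarrow> 0 < i \<and> is_addr e"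
  by (simp add: is_addr_def)

lemma blueprint_app:
  assumes "blueprint u" "blueprint v" "u \<noteq> Map.empty" "v \<noteq> Map.empty"
  shows "blueprint (app \<phi> u v)"
proof (rule blueprint_intro)
  have "dom (app \<phi> u v) \<subseteq> insert [] (Cons 1 ` dom u \<union> Cons 2 ` dom v)"
  proof
    fix d assume "d \<in> dom (app \<phi> u v)"
    then obtain s where "app \<phi> u v d = Some s" by auto
    from app_dom[OF this]
    show "d \<in> insert [] (Cons 1 ` dom u \<union> Cons 2 ` dom v)" by auto
  qed
  moreover have "finite (insert [] (Cons 1 ` dom u \<union> Cons 2 ` dom v))"
    using assms(1,2) by (simp add: blueprint_def)
  ultimately show "finite (dom (app \<phi> u v))" by (rule finite_subset)
next
  fix d assume "d \<in> dom (app \<phi> u v)"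
  then obtain s where "app \<phi> u v d = Some s" by auto
  from app_dom[OF this] show "is_addr d"
  proof (elim disjE exE conjE)
    fix e assume "d = 1 # e" "u e = Some s"
    then show ?thesis using blueprint_addr[OF assms(1)] by simp
  next
    fix e assume "d = 2 # e" "v e = Some s"
    then show ?thesis using blueprint_addr[OF assms(2)] by simp
  qed simp
next
  fix c \<psi> and k :: nat assume A: "app \<phi> u v c = Some (At \<psi>)" and k: "k = 1 \<or> k = 2"
  show "restr (app \<phi> u v) (c @ [k]) \<noteq> Map.empty"
  proof (cases c)
    case Nil then show ?thesis using assms k
      using restr_app1[of \<phi> u v "[]"] restr_app2[of \<phi> u v "[]"] by auto
  next
    case (Cons i e)
    from app_dom[OF A] show ?thesis
    proof (elim disjE exE conjE)
      fix e assume "c = 1 # e" "u e = Some (At \<psi>)"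
      then show ?thesis using blueprint_At[OF assms(1)] k by auto
    next
      fix e assume "c = 2 # e" "v e = Some (At \<psi>)"
      then show ?thesis using blueprint_At[OF assms(2)] k by auto
    qed (simp add: Cons)
  qed
qed

lemma blueprint_star:
  assumes "pw_incomp as" "\<forall>a\<in>set as. is_addr a" "length als = length as" "\<forall>x\<in>set als. blueprint x"
  shows "blueprint (star as als)"
proof (rule blueprint_intro)
  have "dom (star as als) \<subseteq> (\<Union>i\<in>{..<length as}. (\<lambda>e. as ! i @ e) ` dom (als ! i))"
  proof
    fix d assume "d \<in> dom (star as als)"
    then obtain s where "star as als d = Some s" by auto
    from star_dom[OF assms(1,3) this]
    show "d \<in> (\<Union>i\<in>{..<length as}. (\<lambda>e. as ! i @ e) ` dom (als ! i))" by blast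
  qed
  moreover have "finite (\<Union>i\<in>{..<length as}. (\<lambda>e. as ! i @ e) ` dom (als ! i))"
  proof (rule finite_UN_I)
    fix i assume "i \<in> {..<length as}"
    then have "als ! i \<in> set als" using assms(3) by simp
    then have "finite (dom (als ! i))" using assms(4) by (simp add: blueprint_def)
    then show "finite ((\<lambda>e. as ! i @ e) ` dom (als ! i))" by simp
  qed simp
  ultimately show "finite (dom (star as als))" by (rule finite_subset)
next
  fix c assume "c \<in> dom (star as als)"
  then obtain s where "star as als c = Some s" by auto
  from star_dom[OF assms(1,3) this]
  obtain i e where ie: "i < length as" "c = as ! i @ e" "(als ! i) e = Some s"
    by blast
  have "als ! i \<in> set als" using ie assms(3) by simp
  then have "is_addr e" using assms(4) ie blueprint_addr by blast
  moreover have "is_addr (as ! i)" using assms(2) ie by simp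
  ultimately show "is_addr c" using ie by simp
next
  fix c \<psi> and k :: nat assume A: "star as als c = Some (At \<psi>)" and k: "k = 1 \<or> k = 2"
  from star_dom[OF assms(1,3) A]
  obtain i e where ie: "i < length as" "c = as ! i @ e" "(als ! i) e = Some (At \<psi>)"
    by blast
  have "als ! i \<in> set als" using ie assms(3) by simp
  then have bi: "blueprint (als ! i)" using assms(4) by blast
  have R: "restr (star as als) (c @ [k]) = restr (als ! i) (e @ [k])"
  proof
    fix x show "restr (star as als) (c @ [k]) x = restr (als ! i) (e @ [k]) x"
      using star_at[OF assms(1,3) ie(1), of "e @ [k] @ x"] ie(2) by (simp add: restr_def)
  qed
  show "restr (star as als) (c @ [k]) \<noteq> Map.empty"
    unfolding R using blueprint_At[OF bi ie(3)] k by auto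
qed

lemma prefix_snoc_cases:
  assumes "prefix a (d @ [i] @ k)" "\<not> prefix a d"
  shows "prefix (d @ [i]) a"
proof -
  obtain us where "us \<noteq> []" "prefix us ([i] @ k)" "a = d @ us"
    using assms by (auto simp: prefix_append)
  then show ?thesis by (cases us) auto
qed

lemma contr_child:
  assumes "restr \<beta> (d @ [i]) \<noteq> Map.empty" "\<not> prefix a d" "\<beta> b \<noteq> None"
  shows "restr (contr \<beta> a b) (d @ [i]) \<noteq> Map.empty"
proof (cases "prefix (d @ [i]) a")
  case True
  then obtain k where "a = d @ [i] @ k" by (auto simp: prefix_def)
  then have "restr (contr \<beta> a b) (d @ [i]) k = \<beta> b" using contr_at[of \<beta> a b "[]"]
    by (simp add: restr_def)
  then show ?thesis using assms(3) by auto
next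
  case False
  obtain k where k: "restr \<beta> (d @ [i]) k \<noteq> None" using nonempty_ex[OF assms(1)] by blast
  then have k: "\<beta> (d @ [i] @ k) \<noteq> None" by (simp add: restr_def)
  have "\<not> prefix a (d @ [i] @ k)"
  proof
    assume "prefix a (d @ [i] @ k)"
    from prefix_snoc_cases[OF this assms(2)] False show False by simp
  qed
  then have "restr (contr \<beta> a b) (d @ [i]) k = \<beta> (d @ [i] @ k)"
    by (simp add: restr_def contr_def graft_def)
  then show ?thesis using k by auto
qed

lemma contr_dom_cases:
  "contr \<beta> a b d = (if prefix a d then \<beta> (b @ drop (length a) d) else \<beta> d)"
  by (simp add: contr_def graft_def restr_def)

lemma blueprint_contr:
  assumes "blueprint \<beta>" "a \<in> dom \<beta>" "b \<in> dom \<beta>"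
  shows "blueprint (contr \<beta> a b)"
proof (rule blueprint_intro)
  have "dom (contr \<beta> a b) \<subseteq> dom \<beta> \<union> (\<lambda>e. a @ e) ` ((\<lambda>e. b @ e) -` dom \<beta>)"
  proof
    fix d assume d: "d \<in> dom (contr \<beta> a b)"
    show "d \<in> dom \<beta> \<union> (\<lambda>e. a @ e) ` ((\<lambda>e. b @ e) -` dom \<beta>)"
    proof (cases "prefix a d")
      case True
      then obtain e where e: "d = a @ e" by (auto simp: prefix_def)
      then have "b @ e \<in> dom \<beta>" using d by (simp add: contr_dom_cases domIff)
      then have "d \<in> (\<lambda>e. a @ e) ` ((\<lambda>e. b @ e) -` dom \<beta>)" using e by blast
      then show ?thesis by blast
    next
      case False then show ?thesis using d by (simp add: contr_dom_cases domIff)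
    qed
  qed
  moreover have "finite ((\<lambda>e. b @ e) -` dom \<beta>)"
    using assms(1) by (simp add: blueprint_def finite_vimageI inj_on_def)
  moreover have "finite (dom \<beta>)" using assms(1) by (simp add: blueprint_def)
  ultimately show "finite (dom (contr \<beta> a b))"
    by (meson finite_Un finite_imageI finite_subset)
next
  fix d assume d: "d \<in> dom (contr \<beta> a b)"
  show "is_addr d"
  proof (cases "prefix a d")
    case True
    then obtain e where e: "d = a @ e" by (auto simp: prefix_def)
    then have "b @ e \<in> dom \<beta>" using d by (simp add: contr_dom_cases domIff)
    then have "is_addr (b @ e)" using assms(1) by (rule blueprint_addr')
    moreover have "is_addr a" using assms(2,1) by (rule blueprint_addr')
    ultimately show ?thesis using e by simp
  next
    case False
    then have "d \<in> dom \<beta>" using d by (simp add: contr_dom_cases domIff)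
    then show ?thesis using assms(1) by (rule blueprint_addr')
  qed
next
  fix d \<psi> and k :: nat assume A: "contr \<beta> a b d = Some (At \<psi>)" and k: "k = 1 \<or> k = 2"
  show "restr (contr \<beta> a b) (d @ [k]) \<noteq> Map.empty"
  proof (cases "prefix a d")
    case True
    then obtain e where e: "d = a @ e" by (auto simp: prefix_def)
    then have "\<beta> (b @ e) = Some (At \<psi>)" using A by (simp add: contr_dom_cases)
    from blueprint_At[OF assms(1) this] k
    have B: "restr \<beta> (b @ e @ [k]) \<noteq> Map.empty" by auto
    have "restr (contr \<beta> a b) (d @ [k]) = restr \<beta> (b @ e @ [k])"
    proof
      fix x show "restr (contr \<beta> a b) (d @ [k]) x = restr \<beta> (b @ e @ [k]) x"
        using e by (simp add: restr_def contr_dom_cases)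
    qed
    then show ?thesis using B by simp
  next
    case False
    then have "\<beta> d = Some (At \<psi>)" using A by (simp add: contr_dom_cases)
    from blueprint_At[OF assms(1) this] k
    have "restr \<beta> (d @ [k]) \<noteq> Map.empty" by auto
    moreover have "\<beta> b \<noteq> None" using assms(3) by auto
    ultimately show ?thesis using contr_child False by blast
  qed
qed

lemma contr_self: "contr \<beta> a b a = \<beta> b"
  using contr_at[of \<beta> a b "[]"] by simp

lemma up_bp: "up x y \<Longrightarrow> blueprint x \<and> blueprint y"
  by (induction rule: up.induct) (auto simp: blueprint_contr contr_def[symmetric])

lemma up_nonempty: "up x y \<Longrightarrow> y \<noteq> Map.empty \<Longrightarrow> x \<noteq> Map.empty"
proof (induction rule: up.induct)
  case (up_step \<beta> a b)
  have "\<beta> b \<noteq> None" using up_step(3) by auto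
  then have "contr \<beta> a b a \<noteq> None" by (simp add: contr_self)
  then show ?case by (auto simp: contr_def)
qed auto

lemma up_dom: "up x y \<Longrightarrow> \<forall>d\<in>dom x. \<exists>e\<in>dom y. prefix e d"
proof (induction rule: up.induct)
  case (up_step \<beta> a b)
  show ?case
  proof
    fix d assume "d \<in> dom (graft \<beta> a (restr \<beta> b))"
    then show "\<exists>e\<in>dom \<beta>. prefix e d" using up_step(2)
      by (cases "prefix a d") (auto simp: contr_dom_cases contr_def[symmetric])
  qed
next
  case (up_trans x y z)
  then show ?case by (meson prefix_order.order_trans)
qed auto

lemma up_contr: "blueprint \<beta> \<Longrightarrow> a \<in> dom \<beta> \<Longrightarrow> b \<in> dom \<beta> \<Longrightarrow> strict_prefix a b \<Longrightarrow>
    \<beta> a = \<beta> b \<Longrightarrow> up (contr \<beta> a b) \<beta>"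
  unfolding contr_def by (rule up_step)

section \<open>lifting up into contexts\<close>

lemma up_lift:
  fixes F :: "'f ptree \<Rightarrow> 'f ptree" and s :: "addr \<Rightarrow> addr"
  assumes "up x y" "Q y"
  and Qd: "\<And>u v. up u v \<Longrightarrow> Q v \<Longrightarrow> Q u"
  and bp: "\<And>u. blueprint u \<Longrightarrow> Q u \<Longrightarrow> blueprint (F u)"
  and cm: "\<And>u a b. blueprint u \<Longrightarrow> Q u \<Longrightarrow> a \<in> dom u \<Longrightarrow> b \<in> dom u \<Longrightarrow> strict_prefix a b \<Longrightarrow>
            F (contr u a b) = contr (F u) (s a) (s b)"
  and at: "\<And>u a. Q u \<Longrightarrow> a \<in> dom u \<Longrightarrow> F u (s a) = u a"
  and sp: "\<And>a b. strict_prefix a b \<Longrightarrow> strict_prefix (s a) (s b)"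
  shows "up (F x) (F y)"
  using assms(1,2)
proof (induction rule: up.induct)
  case (up_refl \<beta>)
  then have "blueprint (F \<beta>)" using bp by blast
  then show ?case by (rule up.up_refl)
next
  case (up_step \<beta> a b)
  have e: "F (contr \<beta> a b) = contr (F \<beta>) (s a) (s b)" using cm up_step by blast
  have "up (contr (F \<beta>) (s a) (s b)) (F \<beta>)"
  proof (rule up_contr)
    show "blueprint (F \<beta>)" using bp up_step by blast
    have fa: "F \<beta> (s a) = \<beta> a" using at[OF up_step.prems up_step(2)] .
    have fb: "F \<beta> (s b) = \<beta> b" using at[OF up_step.prems up_step(3)] .
    show "s a \<in> dom (F \<beta>)" using fa up_step(2) by (simp add: domIff)
    show "s b \<in> dom (F \<beta>)" using fb up_step(3) by (simp add: domIff)
    show "strict_prefix (s a) (s b)" using sp up_step(4) .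
    show "F \<beta> (s a) = F \<beta> (s b)" using fa fb up_step(5) by simp
  qed
  then show ?case using e by (simp add: contr_def)
next
  case (up_trans x y z)
  have "Q y" using Qd[OF up_trans(2) up_trans.prems] .
  then have "up (F x) (F y)" using up_trans.IH(1) by blast
  moreover have "up (F y) (F z)" using up_trans.IH(2) up_trans.prems by blast
  ultimately show ?case by (rule up.up_trans)
qed

lemma strict_prefix_append_same: "strict_prefix a b \<Longrightarrow> strict_prefix (c @ a) (c @ b)"
  by (auto simp: strict_prefix_def prefix_def)

lemma up_graft_in:
  assumes "up u v" "v \<noteq> Map.empty" "\<And>w. blueprint w \<Longrightarrow> w \<noteq> Map.empty \<Longrightarrow> blueprint (graft z c w)"
  shows "up (graft z c u) (graft z c v)"
proof (rule up_lift[of u v "\<lambda>w. w \<noteq> Map.empty" "\<lambda>w. graft z c w" "\<lambda>a. c @ a"])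
  show "up u v" "v \<noteq> Map.empty" by fact+
  show "\<And>u v. up u v \<Longrightarrow> v \<noteq> Map.empty \<Longrightarrow> u \<noteq> Map.empty" by (rule up_nonempty)
  show "\<And>u. blueprint u \<Longrightarrow> u \<noteq> Map.empty \<Longrightarrow> blueprint (graft z c u)" by fact
  show "\<And>u a b. graft z c (contr u a b) = contr (graft z c u) (c @ a) (c @ b)"
    by (simp add: contr_append)
  show "\<And>u a. graft z c u (c @ a) = u a" by (rule graft_at)
  show "\<And>a b. strict_prefix a b \<Longrightarrow> strict_prefix (c @ a) (c @ b)" by (rule strict_prefix_append_same)
qed

lemma up_app1:
  assumes "up u v" "v \<noteq> Map.empty" "blueprint \<gamma>" "\<gamma> \<noteq> Map.empty"
  shows "up (app \<phi> u \<gamma>) (app \<phi> v \<gamma>)"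
proof -
  have "up (graft (app \<phi> \<gamma> \<gamma>) [1] u) (graft (app \<phi> \<gamma> \<gamma>) [1] v)"
  proof (rule up_graft_in[OF assms(1,2)])
    fix w :: "'a ptree" assume "blueprint w" "w \<noteq> Map.empty"
    then show "blueprint (graft (app \<phi> \<gamma> \<gamma>) [1] w)"
      unfolding app_graft1 using assms(3,4) by (simp add: blueprint_app)
  qed
  then show ?thesis by (simp only: app_graft1)
qed

lemma up_app2:
  assumes "up u v" "v \<noteq> Map.empty" "blueprint \<gamma>" "\<gamma> \<noteq> Map.empty"
  shows "up (app \<phi> \<gamma> u) (app \<phi> \<gamma> v)"
proof -
  have "up (graft (app \<phi> \<gamma> \<gamma>) [2] u) (graft (app \<phi> \<gamma> \<gamma>) [2] v)"
  proof (rule up_graft_in[OF assms(1,2)])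
    fix w :: "'a ptree" assume "blueprint w" "w \<noteq> Map.empty"
    then show "blueprint (graft (app \<phi> \<gamma> \<gamma>) [2] w)"
      unfolding app_graft2 using assms(3,4) by (simp add: blueprint_app)
  qed
  then show ?thesis by (simp only: app_graft2)
qed

lemma up_star_entry:
  assumes "pw_incomp as" "\<forall>a\<in>set as. is_addr a" "length als = length as" "\<forall>x\<in>set als. blueprint x"
    "i < length as" "up u v" "v \<noteq> Map.empty"
  shows "up (star as (als[i := u])) (star as (als[i := v]))"
proof -
  have "up (graft (star as als) (as ! i) u) (graft (star as als) (as ! i) v)"
  proof (rule up_graft_in[OF assms(6,7)])
    fix w :: "'a ptree" assume w: "blueprint w" "w \<noteq> Map.empty"
    have "\<forall>x\<in>set (als[i := w]). blueprint x"
      using set_update_subset_insert[of als i w] assms(4) w(1) by blast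
    then have "blueprint (star as (als[i := w]))"
      using assms by (intro blueprint_star) auto
    then show "blueprint (graft (star as als) (as ! i) w)"
      using star_update[OF assms(1,3,5)] by simp
  qed
  then show ?thesis using star_update[OF assms(1,3,5)] by simp
qed

lemma region_incomp:
  assumes "pw_incomp (bs @ [c])" "e \<in> set bs" "prefix e d"
  shows "\<not> prefix c d \<and> \<not> prefix d c"
proof -
  have i: "\<not> prefix e c" "\<not> prefix c e" using pw_incomp_snoc(2)[OF assms(1)] assms(2) by auto
  show ?thesis
  proof
    show "\<not> prefix c d"
    proof
      assume "prefix c d"
      then have "prefix c e \<or> prefix e c" using assms(3) prefix_same_cases by blast
      then show False using i by blast
    qed
    show "\<not> prefix d c"
    proof
      assume "prefix d c"
      then have "prefix e c" using assms(3) by (rule prefix_order.order_trans[rotated])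
      then show False using i by blast
    qed
  qed
qed

lemma graft_out_contr:
  assumes "\<not> prefix c a" "\<not> prefix a c" "\<not> prefix c b" "\<not> prefix b c"
  shows "graft (contr u a b) c \<gamma> = contr (graft u c \<gamma>) a b"
proof
  fix d
  have nb: "\<And>e. \<not> prefix c (b @ e)"
  proof
    fix e assume "prefix c (b @ e)"
    then have "prefix c b \<or> prefix b c" using prefix_same_cases[of c "b @ e" b] by simp
    then show False using assms by blast
  qed
  show "graft (contr u a b) c \<gamma> d = contr (graft u c \<gamma>) a b d"
  proof (cases "prefix c d")
    case True
    have "\<not> prefix a d"
    proof
      assume "prefix a d"
      then have "prefix c a \<or> prefix a c" using True prefix_same_cases by blast
      then show False using assms by blast
    qed
    then show ?thesis using True by (simp add: graft_def contr_dom_cases)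
  next
    case False
    show ?thesis
    proof (cases "prefix a d")
      case True
      then show ?thesis using False nb by (simp add: graft_def contr_dom_cases)
    next
      case f2: False
      then show ?thesis using False by (simp add: graft_def contr_dom_cases)
    qed
  qed
qed

lemma up_graft_out:
  assumes "up u v" "\<forall>d\<in>dom v. \<exists>e\<in>set bs. prefix e d" "pw_incomp (bs @ [c])"
    "\<forall>a\<in>set (bs @ [c]). is_addr a" "blueprint \<gamma>"
  shows "up (graft u c \<gamma>) (graft v c \<gamma>)"
proof (rule up_lift[of u v "\<lambda>w. \<forall>d\<in>dom w. \<exists>e\<in>set bs. prefix e d" "\<lambda>w. graft w c \<gamma>" "\<lambda>a. a"])
  show "up u v" by fact
  show "\<forall>d\<in>dom v. \<exists>e\<in>set bs. prefix e d" by fact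
  show "\<And>u v :: 'a ptree. up u v \<Longrightarrow> \<forall>d\<in>dom v. \<exists>e\<in>set bs. prefix e d \<Longrightarrow> \<forall>d\<in>dom u. \<exists>e\<in>set bs. prefix e d"
  proof -
    fix u v :: "'a ptree" assume uv: "up u v" "\<forall>d\<in>dom v. \<exists>e\<in>set bs. prefix e d"
    show "\<forall>d\<in>dom u. \<exists>e\<in>set bs. prefix e d"
    proof
      fix d assume d: "d \<in> dom u"
      obtain e where "e \<in> dom v" "prefix e d" using up_dom[OF uv(1)] d by blast
      moreover obtain e' where "e' \<in> set bs" "prefix e' e" using uv(2) calculation(1) by blast
      ultimately show "\<exists>e\<in>set bs. prefix e d" using prefix_order.order_trans by blast
    qed
  qed
  show "\<And>w :: 'a ptree. blueprint w \<Longrightarrow> \<forall>d\<in>dom w. \<exists>e\<in>set bs. prefix e d \<Longrightarrow> blueprint (graft w c \<gamma>)"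
  proof -
    fix w :: "'a ptree" assume w: "blueprint w" "\<forall>d\<in>dom w. \<exists>e\<in>set bs. prefix e d"
    have "w = star bs (map (restr w) bs)" using star_repr[OF w(2)] .
    then have "graft w c \<gamma> = star (bs @ [c]) (map (restr w) bs @ [\<gamma>])"
      using star_snoc[OF assms(3), of "map (restr w) bs" \<gamma>] by simp
    moreover have "blueprint (star (bs @ [c]) (map (restr w) bs @ [\<gamma>]))"
      using assms(3,4,5) blueprint_restr[OF w(1)] by (intro blueprint_star) auto
    ultimately show "blueprint (graft w c \<gamma>)" by simp
  qed
  show "\<And>(w :: 'a ptree) a b. blueprint w \<Longrightarrow> \<forall>d\<in>dom w. \<exists>e\<in>set bs. prefix e d \<Longrightarrow> a \<in> dom w \<Longrightarrow> b \<in> dom w \<Longrightarrow>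
          strict_prefix a b \<Longrightarrow> graft (contr w a b) c \<gamma> = contr (graft w c \<gamma>) a b"
  proof -
    fix w :: "'a ptree" and a b assume w: "\<forall>d\<in>dom w. \<exists>e\<in>set bs. prefix e d" "a \<in> dom w" "b \<in> dom w"
    obtain ea where "ea \<in> set bs" "prefix ea a" using w by blast
    then have ia: "\<not> prefix c a \<and> \<not> prefix a c" using region_incomp[OF assms(3)] by blast
    obtain eb where "eb \<in> set bs" "prefix eb b" using w by blast
    then have ib: "\<not> prefix c b \<and> \<not> prefix b c" using region_incomp[OF assms(3)] by blast
    show "graft (contr w a b) c \<gamma> = contr (graft w c \<gamma>) a b"
      using ia ib by (intro graft_out_contr) auto
  qed
  show "\<And>(w :: 'a ptree) a. \<forall>d\<in>dom w. \<exists>e\<in>set bs. prefix e d \<Longrightarrow> a \<in> dom w \<Longrightarrow> graft w c \<gamma> a = w a"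
  proof -
    fix w :: "'a ptree" and a assume w: "\<forall>d\<in>dom w. \<exists>e\<in>set bs. prefix e d" "a \<in> dom w"
    obtain ea where "ea \<in> set bs" "prefix ea a" using w by blast
    then have "\<not> prefix c a" using region_incomp[OF assms(3)] by blast
    then show "graft w c \<gamma> a = w a" by (simp add: graft_def)
  qed
  show "\<And>a b. strict_prefix a b \<Longrightarrow> strict_prefix a b" .
qed

lemma set_nth_all: "length xs = n \<Longrightarrow> (\<forall>i<n. P (xs ! i)) \<Longrightarrow> \<forall>x\<in>set xs. P x"
  by (auto simp: in_set_conv_nth)

lemma eqv_bp: "eqv x y \<Longrightarrow> blueprint x \<and> blueprint y"
proof (induction rule: eqv.induct)
  case (eqv_app \<alpha>1 \<beta>1 \<alpha>2 \<beta>2 \<phi>)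
  then show ?case by (simp add: blueprint_app)
next
  case (eqv_star as n bs als bes)
  have "\<forall>i<n. blueprint (als ! i)" "\<forall>i<n. blueprint (bes ! i)" using eqv_star.IH by auto
  then have "\<forall>x\<in>set als. blueprint x" "\<forall>x\<in>set bes. blueprint x"
    using set_nth_all eqv_star.hyps by blast+
  then show ?case using eqv_star.hyps by (auto intro!: blueprint_star)
qed auto

lemma star_nonempty:
  assumes "pw_incomp as" "length als = length as" "i < length as" "als ! i \<noteq> Map.empty"
  shows "star as als \<noteq> Map.empty"
proof
  assume A: "star as als = Map.empty"
  obtain k where "(als ! i) k \<noteq> None" using nonempty_ex[OF assms(4)] by blast
  moreover have "star as als (as ! i @ k) = (als ! i) k" using star_at[OF assms(1-3)] .
  ultimately show False using A by simp
qed

lemma eqv_empty_iff: "eqv x y \<Longrightarrow> (x = Map.empty \<longleftrightarrow> y = Map.empty)"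
proof (induction rule: eqv.induct)
  case (eqv_leaf \<phi>)
  then show ?case by simp
next
  case (eqv_star as n bs als bes)
  then obtain i where i: "i < n" "als ! i \<noteq> Map.empty" "bes ! i \<noteq> Map.empty" by blast
  have "star as als \<noteq> Map.empty" using star_nonempty[of as als i] eqv_star.hyps i by simp
  moreover have "star bs bes \<noteq> Map.empty" using star_nonempty[of bs bes i] eqv_star.hyps i by simp
  ultimately show ?case by simp
qed auto

lemma curv_bp: "curv m x y \<Longrightarrow> blueprint x \<and> blueprint y"
proof (induction rule: curv.induct)
  case (curv_base as gs b)
  have pa: "pw_incomp as" using pw_incomp_snoc(1)[OF curv_base.hyps(4)] .
  have "blueprint (star as (take m gs))"
  proof (rule blueprint_star[OF pa])
    show "\<forall>a\<in>set as. is_addr a" using curv_base.hyps(5) by simp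
    show "length (take m gs) = length as" using curv_base.hyps(1,2) by simp
    show "\<forall>x\<in>set (take m gs). blueprint x" using curv_base.hyps(3) by (meson in_set_takeD)
  qed
  moreover have "blueprint (star (as @ [b]) gs)"
    using curv_base.hyps by (intro blueprint_star) auto
  ultimately show ?case by simp
next
  case (curv_app1 \<alpha> \<beta> \<gamma> \<phi>)
  then show ?case by (simp add: blueprint_app)
next
  case (curv_app2 \<alpha> \<beta> \<gamma> \<phi>)
  then show ?case by (simp add: blueprint_app)
next
  case (curv_star as als bs bes c \<gamma>)
  have "blueprint (star (as @ [c]) (als @ [\<gamma>]))"
    using curv_star.hyps by (intro blueprint_star) auto
  moreover have "blueprint (star (bs @ [c]) (bes @ [\<gamma>]))"
    using curv_star.hyps by (intro blueprint_star) auto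
  ultimately show ?case by simp
qed

lemma graft_map_le: "X \<subseteq>\<^sub>m Y \<Longrightarrow> graft X c \<gamma> \<subseteq>\<^sub>m graft Y c \<gamma>"
  by (auto simp: map_le_def graft_def domIff)

lemma map_le_Some: "X \<subseteq>\<^sub>m Y \<Longrightarrow> X e = Some s \<Longrightarrow> Y e = Some s"
  unfolding map_le_def by (metis domI)

lemma app_map_le1: assumes "X \<subseteq>\<^sub>m Y" shows "app \<phi> X \<gamma> \<subseteq>\<^sub>m app \<phi> Y \<gamma>"
  unfolding map_le_def
proof
  fix d assume "d \<in> dom (app \<phi> X \<gamma>)"
  then obtain s where s: "app \<phi> X \<gamma> d = Some s" by auto
  from app_dom[OF s] show "app \<phi> X \<gamma> d = app \<phi> Y \<gamma> d"
  proof (elim disjE exE conjE)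
    fix e assume "d = 1 # e" "X e = Some s"
    then show ?thesis using map_le_Some[OF assms] by simp
  next
    fix e assume "d = 2 # e" "\<gamma> e = Some s"
    then show ?thesis using map_le_Some[OF assms] by simp
  qed simp
qed

lemma app_map_le2: assumes "X \<subseteq>\<^sub>m Y" shows "app \<phi> \<gamma> X \<subseteq>\<^sub>m app \<phi> \<gamma> Y"
  unfolding map_le_def
proof
  fix d assume "d \<in> dom (app \<phi> \<gamma> X)"
  then obtain s where s: "app \<phi> \<gamma> X d = Some s" by auto
  from app_dom[OF s] show "app \<phi> \<gamma> X d = app \<phi> \<gamma> Y d"
  proof (elim disjE exE conjE)
    fix e assume "d = 1 # e" "\<gamma> e = Some s"
    then show ?thesis using map_le_Some[OF assms] by simp
  next
    fix e assume "d = 2 # e" "X e = Some s"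
    then show ?thesis using map_le_Some[OF assms] by simp
  qed simp
qed

lemma curv_le: "curv m x y \<Longrightarrow> x \<subseteq>\<^sub>m y"
proof (induction rule: curv.induct)
  case (curv_base as gs b)
  have pa: "pw_incomp as" using pw_incomp_snoc(1)[OF curv_base.hyps(4)] .
  have l1: "length (take m gs) = length as" using curv_base.hyps(1,2) by simp
  have l2: "length gs = length (as @ [b])" using curv_base.hyps(1,2) by simp
  show ?case unfolding map_le_def
  proof
    fix d assume "d \<in> dom (star as (take m gs))"
    then obtain s where "star as (take m gs) d = Some s" by auto
    from star_dom[OF pa l1 this] obtain i e where ie: "i < length as" "d = as ! i @ e" by blast
    have "star as (take m gs) d = (take m gs ! i) e" using star_at[OF pa l1 ie(1)] ie(2) by simp
    moreover have "star (as @ [b]) gs ((as @ [b]) ! i @ e) = (gs ! i) e"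
      using star_at[OF curv_base.hyps(4) l2, of i e] ie(1) by simp
    moreover have "(as @ [b]) ! i = as ! i" using ie(1) by (simp add: nth_append)
    moreover have "take m gs ! i = gs ! i" using ie(1) curv_base.hyps(1) by simp
    ultimately show "star as (take m gs) d = star (as @ [b]) gs d" using ie(2) by simp
  qed
next
  case (curv_app1 \<alpha> \<beta> \<gamma> \<phi>)
  then show ?case by (simp add: app_map_le1)
next
  case (curv_app2 \<alpha> \<beta> \<gamma> \<phi>)
  then show ?case by (simp add: app_map_le2)
next
  case (curv_star as als bs bes c \<gamma>)
  then show ?case by (simp add: star_snoc graft_map_le)
qed

section \<open>transport along eqv\<close>

lemma restr_star_in:
  assumes "pw_incomp as" "length als = length as" "i < length as"
  shows "restr (star as als) (as ! i @ e) = restr (als ! i) e"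
  using restr_star[OF assms] by (simp add: restr_restr[symmetric])

lemma leaf_Some: "leaf \<phi> b = Some s \<Longrightarrow> b = [] \<and> s = Fm \<phi>"
  by (auto simp: leaf_def split: if_splits)

lemma eqv_sub: "eqv x y \<Longrightarrow> \<forall>b s. x b = Some s \<longrightarrow> (\<exists>b'. y b' = Some s \<and> eqv (restr x b) (restr y b'))"
proof (induction rule: eqv.induct)
  case eqv_empty
  then show ?case by simp
next
  case (eqv_leaf \<phi>)
  show ?case
  proof (intro allI impI)
    fix b s assume "leaf \<phi> b = Some s"
    then have "b = [] \<and> s = Fm \<phi>" by (rule leaf_Some)
    then show "\<exists>b'. leaf \<phi> b' = Some s \<and> eqv (restr (leaf \<phi>) b) (restr (leaf \<phi>) b')"
      using eqv.eqv_leaf[of \<phi>] by (intro exI[of _ "[]"]) (simp add: leaf_def)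
  qed
next
  case (eqv_app \<alpha>1 \<beta>1 \<alpha>2 \<beta>2 \<phi>)
  show ?case
  proof (intro allI impI)
    fix b s assume bs: "app \<phi> \<alpha>1 \<alpha>2 b = Some s"
    from app_dom[OF bs]
    show "\<exists>b'. app \<phi> \<beta>1 \<beta>2 b' = Some s \<and> eqv (restr (app \<phi> \<alpha>1 \<alpha>2) b) (restr (app \<phi> \<beta>1 \<beta>2) b')"
    proof (elim disjE exE conjE)
      assume "b = []"
      then have "s = At \<phi>" using bs by simp
      moreover have "eqv (app \<phi> \<alpha>1 \<alpha>2) (app \<phi> \<beta>1 \<beta>2)"
        using eqv_app by (intro eqv.eqv_app) auto
      ultimately show ?thesis using \<open>b = []\<close> by (intro exI[of _ "[]"]) simp
    next
      fix e assume e: "b = 1 # e" "\<alpha>1 e = Some s"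
      obtain b'' where "\<beta>1 b'' = Some s" "eqv (restr \<alpha>1 e) (restr \<beta>1 b'')"
        using eqv_app.IH(1) e(2) by blast
      then show ?thesis using e by (intro exI[of _ "1 # b''"]) simp
    next
      fix e assume e: "b = 2 # e" "\<alpha>2 e = Some s"
      obtain b'' where "\<beta>2 b'' = Some s" "eqv (restr \<alpha>2 e) (restr \<beta>2 b'')"
        using eqv_app.IH(2) e(2) by blast
      then show ?thesis using e by (intro exI[of _ "2 # b''"]) simp
    qed
  qed
next
  case (eqv_star as n bs als bes)
  show ?case
  proof (intro allI impI)
    fix b s assume bs: "star as als b = Some s"
    have la: "length als = length as" "length bes = length bs" using eqv_star.hyps by auto
    from star_dom[OF eqv_star.hyps(5) la(1) bs]
    obtain i e where ie: "i < length as" "b = as ! i @ e" "(als ! i) e = Some s" by blast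
    have iI: "i < n" using ie eqv_star.hyps by simp
    have IH: "\<forall>b s. (als ! i) b = Some s \<longrightarrow> (\<exists>b'. (bes ! i) b' = Some s \<and> eqv (restr (als ! i) b) (restr (bes ! i) b'))"
      using eqv_star.IH iI by blast
    obtain b'' where b'': "(bes ! i) b'' = Some s" "eqv (restr (als ! i) e) (restr (bes ! i) b'')"
      using IH ie(3) by blast
    have ib: "i < length bs" using iI eqv_star.hyps by simp
    have "star bs bes (bs ! i @ b'') = Some s" using star_at[OF eqv_star.hyps(6) la(2) ib] b''(1) by simp
    moreover have "restr (star as als) b = restr (als ! i) e"
      using restr_star_in[OF eqv_star.hyps(5) la(1) ie(1)] ie(2) by simp
    moreover have "restr (star bs bes) (bs ! i @ b'') = restr (bes ! i) b''"
      using restr_star_in[OF eqv_star.hyps(6) la(2) ib] by simp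
    ultimately show "\<exists>b'. star bs bes b' = Some s \<and> eqv (restr (star as als) b) (restr (star bs bes) b')"
      using b''(2) by (intro exI[of _ "bs ! i @ b''"]) simp
  qed
qed

lemma contr_Nil: "contr x [] b = restr x b"
  by (simp add: contr_def)

lemma contr_app1: "contr (app \<phi> u v) (1 # a) (1 # b) = app \<phi> (contr u a b) v"
proof -
  have "contr (app \<phi> u v) ([1] @ a) ([1] @ b) = graft (app \<phi> u v) [1] (contr (restr (app \<phi> u v) [1]) a b)"
    by (rule contr_append)
  also have "restr (app \<phi> u v) [1] = u" using restr_app1[of \<phi> u v "[]"] by simp
  finally show ?thesis by (simp only: app_graft1 append_Cons append_Nil)
qed

lemma contr_app2: "contr (app \<phi> u v) (2 # a) (2 # b) = app \<phi> u (contr v a b)"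
proof -
  have "contr (app \<phi> u v) ([2] @ a) ([2] @ b) = graft (app \<phi> u v) [2] (contr (restr (app \<phi> u v) [2]) a b)"
    by (rule contr_append)
  also have "restr (app \<phi> u v) [2] = v" using restr_app2[of \<phi> u v "[]"] by simp
  finally show ?thesis by (simp only: app_graft2 append_Cons append_Nil)
qed

lemma contr_star:
  assumes "pw_incomp as" "length als = length as" "i < length as"
  shows "contr (star as als) (as ! i @ a) (as ! i @ b) = star as (als[i := contr (als ! i) a b])"
  using contr_append[of "star as als" "as ! i" a b] restr_star[OF assms] star_update[OF assms] by simp

lemma contr_nonempty: "u a' \<noteq> None \<Longrightarrow> contr v a u' \<noteq> Map.empty \<or> True"
  by simp

lemma contr_ne: "\<beta> b \<noteq> None \<Longrightarrow> contr \<beta> a b \<noteq> Map.empty"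
  by (metis contr_self)

lemma strict_prefix_Cons_ex: "strict_prefix (i # a) b \<Longrightarrow> \<exists>b'. b = i # b' \<and> strict_prefix a b'"
  by (cases b) (auto simp: strict_prefix_def)

lemma strict_prefix_append_ex: "strict_prefix (c @ a) b \<Longrightarrow> \<exists>b'. b = c @ b' \<and> strict_prefix a b'"
  by (auto simp: strict_prefix_def prefix_def)

lemma eqv_transport:
  "eqv x y \<Longrightarrow> \<forall>a b. a \<in> dom x \<longrightarrow> b \<in> dom x \<longrightarrow> strict_prefix a b \<longrightarrow> x a = x b \<longrightarrow>
     (\<exists>z. eqv (contr x a b) z \<and> up z y)"
proof (induction rule: eqv.induct)
  case eqv_empty
  then show ?case by simp
next
  case (eqv_leaf \<phi>)
  show ?case
  proof (intro allI impI)
    fix a b assume "a \<in> dom (leaf \<phi>)" "b \<in> dom (leaf \<phi>)" "strict_prefix a b"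
    then show "\<exists>z. eqv (contr (leaf \<phi>) a b) z \<and> up z (leaf \<phi>)"
      by (auto simp: leaf_def split: if_splits)
  qed
next
  case (eqv_app \<alpha>1 \<beta>1 \<alpha>2 \<beta>2 \<phi>)
  have bp: "blueprint \<alpha>1" "blueprint \<beta>1" "blueprint \<alpha>2" "blueprint \<beta>2"
    using eqv_bp eqv_app.hyps(1,2) by blast+
  have bpy: "blueprint (app \<phi> \<beta>1 \<beta>2)" using bp eqv_app.hyps by (simp add: blueprint_app)
  show ?case
  proof (intro allI impI)
    fix a b assume a: "a \<in> dom (app \<phi> \<alpha>1 \<alpha>2)" and b: "b \<in> dom (app \<phi> \<alpha>1 \<alpha>2)"
      and ab: "strict_prefix a b" and eq: "app \<phi> \<alpha>1 \<alpha>2 a = app \<phi> \<alpha>1 \<alpha>2 b"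
    obtain sa where sa: "app \<phi> \<alpha>1 \<alpha>2 a = Some sa" using a by auto
    obtain sb where sb: "app \<phi> \<alpha>1 \<alpha>2 b = Some sb" using b by auto
    show "\<exists>z. eqv (contr (app \<phi> \<alpha>1 \<alpha>2) a b) z \<and> up z (app \<phi> \<beta>1 \<beta>2)"
    proof (cases "a = []")
      case True
      then have "sb = At \<phi>" using sa sb eq by simp
      have "b \<noteq> []" using ab True by auto
      then have "(\<exists>e. b = 1 # e \<and> \<alpha>1 e = Some sb) \<or> (\<exists>e. b = 2 # e \<and> \<alpha>2 e = Some sb)"
        using app_dom_ne[OF _ sb] by simp
      then show ?thesis
      proof (elim disjE exE conjE)
        fix e assume e: "b = 1 # e" "\<alpha>1 e = Some sb"
        obtain b'' where b'': "\<beta>1 b'' = Some sb" "eqv (restr \<alpha>1 e) (restr \<beta>1 b'')"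
          using eqv_sub[OF eqv_app.hyps(1)] e(2) by blast
        have u: "up (contr (app \<phi> \<beta>1 \<beta>2) [] (1 # b'')) (app \<phi> \<beta>1 \<beta>2)"
          using bpy b'' \<open>sb = At \<phi>\<close> by (intro up_contr) (auto simp: strict_prefix_def)
        have c1: "contr (app \<phi> \<beta>1 \<beta>2) [] (1 # b'') = restr \<beta>1 b''" by (simp add: contr_Nil)
        have c2: "contr (app \<phi> \<alpha>1 \<alpha>2) a b = restr \<alpha>1 e" using True e by (simp add: contr_Nil)
        have "up (restr \<beta>1 b'') (app \<phi> \<beta>1 \<beta>2)" using u c1 by simp
        moreover have "eqv (contr (app \<phi> \<alpha>1 \<alpha>2) a b) (restr \<beta>1 b'')" using c2 b''(2) by simp
        ultimately show ?thesis by (intro exI[of _ "restr \<beta>1 b''"] conjI)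
      next
        fix e assume e: "b = 2 # e" "\<alpha>2 e = Some sb"
        obtain b'' where b'': "\<beta>2 b'' = Some sb" "eqv (restr \<alpha>2 e) (restr \<beta>2 b'')"
          using eqv_sub[OF eqv_app.hyps(2)] e(2) by blast
        have u: "up (contr (app \<phi> \<beta>1 \<beta>2) [] (2 # b'')) (app \<phi> \<beta>1 \<beta>2)"
          using bpy b'' \<open>sb = At \<phi>\<close> by (intro up_contr) (auto simp: strict_prefix_def)
        have c1: "contr (app \<phi> \<beta>1 \<beta>2) [] (2 # b'') = restr \<beta>2 b''" by (simp add: contr_Nil)
        have c2: "contr (app \<phi> \<alpha>1 \<alpha>2) a b = restr \<alpha>2 e" using True e by (simp add: contr_Nil)
        have "up (restr \<beta>2 b'') (app \<phi> \<beta>1 \<beta>2)" using u c1 by simp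
        moreover have "eqv (contr (app \<phi> \<alpha>1 \<alpha>2) a b) (restr \<beta>2 b'')" using c2 b''(2) by simp
        ultimately show ?thesis by (intro exI[of _ "restr \<beta>2 b''"] conjI)
      qed
    next
      case False
      then have "(\<exists>e. a = 1 # e \<and> \<alpha>1 e = Some sa) \<or> (\<exists>e. a = 2 # e \<and> \<alpha>2 e = Some sa)"
        using app_dom_ne[OF _ sa] by simp
      then show ?thesis
      proof (elim disjE exE conjE)
        fix a' assume a': "a = 1 # a'" "\<alpha>1 a' = Some sa"
        have sp: "strict_prefix (1 # a') b" using ab unfolding a'(1) .
        obtain b' where b': "b = 1 # b'" "strict_prefix a' b'" using strict_prefix_Cons_ex[OF sp] by metis
        have "\<alpha>1 b' = Some sb" using sb unfolding b'(1) app_1'[of \<phi> \<alpha>1 \<alpha>2] .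
        have eq1: "\<alpha>1 a' = \<alpha>1 b'" using eq unfolding a'(1) b'(1) app_1'[of \<phi> \<alpha>1 \<alpha>2] .
        obtain z1 where z1: "eqv (contr \<alpha>1 a' b') z1" "up z1 \<beta>1"
          using eqv_app.IH(1) a'(2) \<open>\<alpha>1 b' = Some sb\<close> b'(2) eq1 by blast
        have c1: "contr \<alpha>1 a' b' \<noteq> Map.empty" using contr_ne[of "\<alpha>1" b' a'] \<open>\<alpha>1 b' = Some sb\<close> by simp
        have zne: "z1 \<noteq> Map.empty" using eqv_empty_iff[OF z1(1)] c1 by simp
        have "eqv (app \<phi> (contr \<alpha>1 a' b') \<alpha>2) (app \<phi> z1 \<beta>2)"
          by (rule eqv.eqv_app[OF z1(1) eqv_app.hyps(2) c1 eqv_app.hyps(4) zne eqv_app.hyps(6)])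
        moreover have "up (app \<phi> z1 \<beta>2) (app \<phi> \<beta>1 \<beta>2)"
          by (rule up_app1[OF z1(2) eqv_app.hyps(5) bp(4) eqv_app.hyps(6)])
        moreover have "contr (app \<phi> \<alpha>1 \<alpha>2) a b = app \<phi> (contr \<alpha>1 a' b') \<alpha>2"
          unfolding a'(1) b'(1) by (rule contr_app1)
        ultimately show ?thesis by auto
      next
        fix a' assume a': "a = 2 # a'" "\<alpha>2 a' = Some sa"
        have sp: "strict_prefix (2 # a') b" using ab unfolding a'(1) .
        obtain b' where b': "b = 2 # b'" "strict_prefix a' b'" using strict_prefix_Cons_ex[OF sp] by metis
        have "\<alpha>2 b' = Some sb" using sb unfolding b'(1) app_2'[of \<phi> \<alpha>1 \<alpha>2] .
        have eq1: "\<alpha>2 a' = \<alpha>2 b'" using eq unfolding a'(1) b'(1) app_2'[of \<phi> \<alpha>1 \<alpha>2] .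
        obtain z1 where z1: "eqv (contr \<alpha>2 a' b') z1" "up z1 \<beta>2"
          using eqv_app.IH(2) a'(2) \<open>\<alpha>2 b' = Some sb\<close> b'(2) eq1 by blast
        have c1: "contr \<alpha>2 a' b' \<noteq> Map.empty" using contr_ne[of "\<alpha>2" b' a'] \<open>\<alpha>2 b' = Some sb\<close> by simp
        have zne: "z1 \<noteq> Map.empty" using eqv_empty_iff[OF z1(1)] c1 by simp
        have "eqv (app \<phi> \<alpha>1 (contr \<alpha>2 a' b')) (app \<phi> \<beta>1 z1)"
          by (rule eqv.eqv_app[OF eqv_app.hyps(1) z1(1) eqv_app.hyps(3) c1 eqv_app.hyps(5) zne])
        moreover have "up (app \<phi> \<beta>1 z1) (app \<phi> \<beta>1 \<beta>2)"
          by (rule up_app2[OF z1(2) eqv_app.hyps(6) bp(2) eqv_app.hyps(5)])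
        moreover have "contr (app \<phi> \<alpha>1 \<alpha>2) a b = app \<phi> \<alpha>1 (contr \<alpha>2 a' b')"
          unfolding a'(1) b'(1) by (rule contr_app2)
        ultimately show ?thesis by auto
      qed
    qed
  qed
next
  case (eqv_star as n bs als bes)
  have la: "length als = length as" "length bes = length bs" using eqv_star.hyps by auto
  show ?case
  proof (intro allI impI)
    fix a b assume a: "a \<in> dom (star as als)" and b: "b \<in> dom (star as als)"
      and ab: "strict_prefix a b" and eq: "star as als a = star as als b"
    obtain sa where sa: "star as als a = Some sa" using a by auto
    obtain sb where sb: "star as als b = Some sb" using b by auto
    from star_dom[OF eqv_star.hyps(5) la(1) sa]
    obtain i a' where ia: "i < length as" "a = as ! i @ a'" "(als ! i) a' = Some sa" by blast
    obtain b' where b': "b = as ! i @ b'" "strict_prefix a' b'"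
      using strict_prefix_append_ex[of "as ! i" a' b] ab ia(2) by auto
    have sb': "(als ! i) b' = Some sb" using sb b'(1) star_at[OF eqv_star.hyps(5) la(1) ia(1)] by simp
    have eq': "(als ! i) a' = (als ! i) b'" using eq ia b'(1) star_at[OF eqv_star.hyps(5) la(1) ia(1)] by simp
    have iI: "i < n" using ia eqv_star.hyps by simp
    have ib: "i < length bs" using iI eqv_star.hyps by simp
    have IHi: "eqv (als ! i) (bes ! i)"
      "\<forall>a b. a \<in> dom (als ! i) \<longrightarrow> b \<in> dom (als ! i) \<longrightarrow> strict_prefix a b \<longrightarrow> (als ! i) a = (als ! i) b \<longrightarrow>
         (\<exists>z. eqv (contr (als ! i) a b) z \<and> up z (bes ! i))"
      using eqv_star.IH iI by blast+
    obtain zi where zi: "eqv (contr (als ! i) a' b') zi" "up zi (bes ! i)"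
      using IHi(2) ia(3) sb' b'(2) eq' by blast
    define ci where "ci = contr (als ! i) a' b'"
    have ci: "ci \<noteq> Map.empty" using contr_ne[of "als ! i" b' a'] sb' ci_def by simp
    have zne: "zi \<noteq> Map.empty" using eqv_empty_iff[OF zi(1)] ci ci_def by simp
    have bne: "bes ! i \<noteq> Map.empty" using eqv_empty_iff[OF IHi(1)] ia(3) by auto
    have "eqv (star as (als[i := ci])) (star bs (bes[i := zi]))"
    proof (rule eqv.eqv_star[where n = n])
      show "length as = n" "length bs = n" "length (als[i := ci]) = n" "length (bes[i := zi]) = n"
        using eqv_star.hyps by auto
      show "pw_incomp as" "pw_incomp bs" "\<forall>a\<in>set as. is_addr a" "\<forall>b\<in>set bs. is_addr b"
        "\<not> (as = [[]] \<and> bs = [[]])" using eqv_star.hyps by auto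
      show "\<forall>j<n. eqv (als[i := ci] ! j) (bes[i := zi] ! j)"
      proof (intro allI impI)
        fix j assume j: "j < n"
        show "eqv (als[i := ci] ! j) (bes[i := zi] ! j)"
        proof (cases "j = i")
          case True then show ?thesis using zi(1) ci_def j eqv_star.hyps by simp
        next
          case False then show ?thesis using eqv_star.IH j by simp
        qed
      qed
      show "\<exists>j<n. als[i := ci] ! j \<noteq> Map.empty \<and> bes[i := zi] ! j \<noteq> Map.empty"
        using iI ci zne eqv_star.hyps by (intro exI[of _ i]) simp
    qed
    moreover have "contr (star as als) a b = star as (als[i := ci])"
      using contr_star[OF eqv_star.hyps(5) la(1) ia(1)] ia(2) b'(1) ci_def by simp
    moreover have "up (star bs (bes[i := zi])) (star bs bes)"
    proof -
      have "\<forall>j<n. blueprint (bes ! j)" using eqv_star.IH eqv_bp by blast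
      then have "\<forall>x\<in>set bes. blueprint x" using set_nth_all eqv_star.hyps by blast
      then have "up (star bs (bes[i := zi])) (star bs (bes[i := bes ! i]))"
        using eqv_star.hyps ib zi(2) bne by (intro up_star_entry) auto
      then show ?thesis by simp
    qed
    ultimately show "\<exists>z. eqv (contr (star as als) a b) z \<and> up z (star bs bes)" by auto
  qed
qed

section \<open>curv and contraction\<close>

lemma star_dom_region:
  assumes "pw_incomp as" "length als = length as"
  shows "\<forall>d\<in>dom (star as als). \<exists>e\<in>set as. prefix e d"
proof
  fix d assume "d \<in> dom (star as als)"
  then obtain s where "star as als d = Some s" by auto
  from star_dom[OF assms this] obtain i e where ie: "i < length as" "d = as ! i @ e" by blast
  have "as ! i \<in> set as" using ie(1) by simp
  moreover have "prefix (as ! i) d" using ie(2) by simp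
  ultimately show "\<exists>e\<in>set as. prefix e d" by (rule bexI[rotated])
qed

lemma restr_graft_out:
  assumes "\<not> prefix c b" "\<not> prefix b c"
  shows "restr (graft X c \<gamma>) b = restr X b"
proof
  fix e
  have "\<not> prefix c (b @ e)"
  proof
    assume "prefix c (b @ e)"
    then have "prefix c b \<or> prefix b c" using prefix_same_cases[of c "b @ e" b] by simp
    then show False using assms by simp
  qed
  then show "restr (graft X c \<gamma>) b e = restr X b e" by (simp add: restr_def graft_def)
qed

lemma restr_graft_in: "restr (graft X c \<gamma>) (c @ e) = restr \<gamma> e"
  by (metis restr_graft_same restr_restr)

lemma curv_restr:
  "curv m x y \<Longrightarrow> \<forall>b s. x b = Some s \<longrightarrow> restr x b = restr y b \<or> curv m (restr x b) (restr y b)"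
proof (induction rule: curv.induct)
  case (curv_base as gs b0)
  have pa: "pw_incomp as" using pw_incomp_snoc(1)[OF curv_base.hyps(4)] .
  have l1: "length (take m gs) = length as" using curv_base.hyps(1,2) by simp
  have l2: "length gs = length (as @ [b0])" using curv_base.hyps(1,2) by simp
  show ?case
  proof (intro allI impI)
    fix b s assume bs: "star as (take m gs) b = Some s"
    from star_dom[OF pa l1 bs] obtain i e where ie: "i < length as" "b = as ! i @ e" by blast
    have "restr (star as (take m gs)) b = restr (take m gs ! i) e"
      using restr_star_in[OF pa l1 ie(1)] ie(2) by simp
    moreover have "restr (star (as @ [b0]) gs) ((as @ [b0]) ! i @ e) = restr (gs ! i) e"
      using restr_star_in[OF curv_base.hyps(4) l2, of i e] ie(1) by simp
    moreover have "(as @ [b0]) ! i = as ! i" using ie(1) by (simp add: nth_append)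
    moreover have "take m gs ! i = gs ! i" using ie(1) curv_base.hyps(1) by simp
    ultimately show "restr (star as (take m gs)) b = restr (star (as @ [b0]) gs) b \<or>
        curv m (restr (star as (take m gs)) b) (restr (star (as @ [b0]) gs) b)"
      using ie(2) by simp
  qed
next
  case (curv_app1 \<alpha> \<beta> \<gamma> \<phi>)
  have cv: "curv m (app \<phi> \<alpha> \<gamma>) (app \<phi> \<beta> \<gamma>)"
    using curv_app1.hyps by (rule curv.curv_app1)
  show ?case
  proof (intro allI impI)
    fix b s assume bs: "app \<phi> \<alpha> \<gamma> b = Some s"
    show "restr (app \<phi> \<alpha> \<gamma>) b = restr (app \<phi> \<beta> \<gamma>) b \<or> curv m (restr (app \<phi> \<alpha> \<gamma>) b) (restr (app \<phi> \<beta> \<gamma>) b)"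
    proof (cases "b = []")
      case True then show ?thesis using cv by simp
    next
      case False
      from app_dom_ne[OF False bs] show ?thesis
      proof (elim disjE exE conjE)
        fix e assume e: "b = 1 # e" "\<alpha> e = Some s"
        have "restr \<alpha> e = restr \<beta> e \<or> curv m (restr \<alpha> e) (restr \<beta> e)"
          using curv_app1.IH e(2) by blast
        then show ?thesis unfolding e(1) restr_app1 .
      next
        fix e assume e: "b = 2 # e" "\<gamma> e = Some s"
        show ?thesis unfolding e(1) restr_app2 by simp
      qed
    qed
  qed
next
  case (curv_app2 \<alpha> \<beta> \<gamma> \<phi>)
  have cv: "curv m (app \<phi> \<gamma> \<alpha>) (app \<phi> \<gamma> \<beta>)"
    using curv_app2.hyps by (rule curv.curv_app2)
  show ?case
  proof (intro allI impI)
    fix b s assume bs: "app \<phi> \<gamma> \<alpha> b = Some s"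
    show "restr (app \<phi> \<gamma> \<alpha>) b = restr (app \<phi> \<gamma> \<beta>) b \<or> curv m (restr (app \<phi> \<gamma> \<alpha>) b) (restr (app \<phi> \<gamma> \<beta>) b)"
    proof (cases "b = []")
      case True then show ?thesis using cv by simp
    next
      case False
      from app_dom_ne[OF False bs] show ?thesis
      proof (elim disjE exE conjE)
        fix e assume e: "b = 1 # e" "\<gamma> e = Some s"
        show ?thesis unfolding e(1) restr_app1 by simp
      next
        fix e assume e: "b = 2 # e" "\<alpha> e = Some s"
        have "restr \<alpha> e = restr \<beta> e \<or> curv m (restr \<alpha> e) (restr \<beta> e)"
          using curv_app2.IH e(2) by blast
        then show ?thesis unfolding e(1) restr_app2 .
      qed
    qed
  qed
next
  case (curv_star as als bs bes c \<gamma>)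
  have ex: "star (as @ [c]) (als @ [\<gamma>]) = graft (star as als) c \<gamma>"
    using star_snoc[OF curv_star.hyps(6) curv_star.hyps(2)[symmetric]] .
  have ey: "star (bs @ [c]) (bes @ [\<gamma>]) = graft (star bs bes) c \<gamma>"
    using star_snoc[OF curv_star.hyps(7) curv_star.hyps(3)[symmetric]] .
  have pa: "pw_incomp as" using pw_incomp_snoc(1)[OF curv_star.hyps(6)] .
  show ?case unfolding ex ey
  proof (intro allI impI)
    fix b s assume bs: "graft (star as als) c \<gamma> b = Some s"
    show "restr (graft (star as als) c \<gamma>) b = restr (graft (star bs bes) c \<gamma>) b \<or>
          curv m (restr (graft (star as als) c \<gamma>) b) (restr (graft (star bs bes) c \<gamma>) b)"
    proof (cases "prefix c b")
      case True
      then obtain e where "b = c @ e" by (auto simp: prefix_def)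
      then show ?thesis by (simp add: restr_graft_in)
    next
      case False
      then have "star as als b = Some s" using bs by (simp add: graft_def)
      then obtain e where e: "e \<in> set as" "prefix e b"
        using star_dom_region[OF pa curv_star.hyps(2)[symmetric]] by (auto simp: domIff)
      have inc: "\<not> prefix c b \<and> \<not> prefix b c" using region_incomp[OF curv_star.hyps(6) e] .
      have "restr (star as als) b = restr (star bs bes) b \<or> curv m (restr (star as als) b) (restr (star bs bes) b)"
        using curv_star.IH \<open>star as als b = Some s\<close> by blast
      then show ?thesis using inc by (simp add: restr_graft_out)
    qed
  qed
qed

lemma list_len1: "length xs = 1 \<Longrightarrow> \<exists>p. xs = [p]"
  by (cases xs) auto

lemma list_len2: "length xs = Suc 1 \<Longrightarrow> \<exists>p q. xs = [p, q]"
  by (cases xs; cases "tl xs") auto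

lemma curv_contr:
  "curv 1 x y \<Longrightarrow> \<forall>a b. a \<in> dom x \<longrightarrow> b \<in> dom x \<longrightarrow> strict_prefix a b \<longrightarrow> x a = x b \<longrightarrow>
     (\<exists>z. (z = contr x a b \<or> curv 1 (contr x a b) z) \<and> up z y)"
proof (induction rule: curv.induct)
  case (curv_base as gs b0)
  obtain p where p: "as = [p]" using list_len1 curv_base.hyps(1) by blast
  obtain g0 g1 where g: "gs = [g0, g1]" using list_len2 curv_base.hyps(2) by blast
  have tk: "take 1 [g0, g1] = [g0]" by simp
  have pw1: "pw_incomp [p]" using pw_incomp_snoc(1)[OF curv_base.hyps(4)] p by simp
  have pw2: "pw_incomp [p, b0]" using curv_base.hyps(4) p by simp
  have ad: "\<forall>a\<in>set [p, b0]. is_addr a" using curv_base.hyps(5) p by simp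
  have bg: "blueprint g0" "blueprint g1" using curv_base.hyps(3) g by auto
  have e01: "eqv g0 g1" using curv_base.hyps(6) g by simp
  have g1ne: "g1 \<noteq> Map.empty" using curv_base.hyps(7) g eqv.eqv_empty by auto
  show ?case unfolding p g tk append.simps
  proof (intro allI impI)
    fix a b assume a: "a \<in> dom (star [p] [g0])" and b: "b \<in> dom (star [p] [g0])"
      and ab: "strict_prefix a b" and eq: "star [p] [g0] a = star [p] [g0] b"
    obtain sa where sa: "star [p] [g0] a = Some sa" using a by auto
    from star_dom[OF pw1 _ sa] obtain i a' where ia: "i < 1" "a = [p] ! i @ a'" "([g0] ! i) a' = Some sa"
      by auto
    have i0: "i = 0" using ia(1) by simp
    have a': "a = p @ a'" "g0 a' = Some sa" using ia i0 by auto
    obtain b' where b': "b = p @ b'" "strict_prefix a' b'"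
      using strict_prefix_append_ex[of p a' b] ab a'(1) by auto
    have at: "\<And>d. star [p] [g0] (p @ d) = g0 d" using star_at[OF pw1, of "[g0]" 0] by simp
    have sb: "g0 b' \<noteq> None" using b b'(1) at by (auto simp: domIff)
    have eq': "g0 a' = g0 b'" using eq a'(1) b'(1) at by simp
    have da: "a' \<in> dom g0" using a'(2) by (simp add: domIff)
    have db: "b' \<in> dom g0" using sb by (simp add: domIff)
    obtain h where h: "eqv (contr g0 a' b') h" "up h g1"
      using eqv_transport[OF e01, rule_format, OF da db b'(2) eq'] by blast
    define c0 where "c0 = contr g0 a' b'"
    have c0ne: "c0 \<noteq> Map.empty" using contr_ne[of g0 b' a'] sb c0_def by simp
    have c0bp: "blueprint c0" using blueprint_contr[OF bg(1)] a'(2) sb c0_def by (auto simp: domIff)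
    have hne: "h \<noteq> Map.empty" using eqv_empty_iff[OF h(1)] c0ne c0_def by simp
    have hbp: "blueprint h" using up_bp[OF h(2)] by simp
    have cx: "contr (star [p] [g0]) a b = star [p] [c0]"
      using contr_star[OF pw1, of "[g0]" 0 a' b'] a'(1) b'(1) c0_def by simp
    have "curv 1 (star [p] (take 1 [c0, h])) (star ([p] @ [b0]) [c0, h])"
    proof (rule curv.curv_base)
      show "length [p] = 1" "length [c0, h] = Suc 1" by simp_all
      show "\<forall>g\<in>set [c0, h]. blueprint g" using c0bp hbp by simp
      show "pw_incomp ([p] @ [b0])" using pw2 by simp
      show "\<forall>a\<in>set ([p] @ [b0]). is_addr a" using ad by simp
      show "\<forall>i<1. eqv ([c0, h] ! i) ([c0, h] ! Suc i)" using h(1) c0_def by simp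
      show "\<not> eqv ([c0, h] ! 1) Map.empty" using hne eqv_empty_iff by fastforce
    qed
    then have cv: "curv 1 (star [p] [c0]) (star [p, b0] [c0, h])" by simp
    have up1: "up (star [p, b0] [c0, h]) (star [p, b0] [g0, h])"
    proof -
      have "up (star [p, b0] ([g0, h][0 := c0])) (star [p, b0] ([g0, h][0 := g0]))"
      proof (rule up_star_entry[OF pw2 ad])
        show "length [g0, h] = length [p, b0]" by simp
        show "\<forall>x\<in>set [g0, h]. blueprint x" using bg hbp by simp
        show "0 < length [p, b0]" by simp
        show "up c0 g0" unfolding c0_def using bg(1) a'(2) sb b'(2) eq'
          by (intro up_contr) (auto simp: domIff)
        show "g0 \<noteq> Map.empty" using a'(2) by auto
      qed
      then show ?thesis by simp
    qed
    have up2: "up (star [p, b0] [g0, h]) (star [p, b0] [g0, g1])"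
    proof -
      have "up (star [p, b0] ([g0, g1][1 := h])) (star [p, b0] ([g0, g1][1 := g1]))"
      proof (rule up_star_entry[OF pw2 ad])
        show "length [g0, g1] = length [p, b0]" by simp
        show "\<forall>x\<in>set [g0, g1]. blueprint x" using bg by simp
        show "1 < length [p, b0]" by simp
        show "up h g1" by (rule h(2))
        show "g1 \<noteq> Map.empty" by (rule g1ne)
      qed
      then show ?thesis by simp
    qed
    have "up (star [p, b0] [c0, h]) (star [p, b0] [g0, g1])" using up1 up2 by (rule up.up_trans)
    then show "\<exists>z. (z = contr (star [p] [g0]) a b \<or> curv 1 (contr (star [p] [g0]) a b) z) \<and> up z (star [p, b0] [g0, g1])"
      unfolding cx using cv by (intro exI[of _ "star [p, b0] [c0, h]"] conjI disjI2)
  qed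
next
  case (curv_app1 \<alpha> \<beta> \<gamma> \<phi>)
  have cv: "curv 1 (app \<phi> \<alpha> \<gamma>) (app \<phi> \<beta> \<gamma>)" using curv_app1.hyps by (rule curv.curv_app1)
  have bpy: "blueprint (app \<phi> \<beta> \<gamma>)" using curv_bp[OF cv] by simp
  have bpb: "blueprint \<beta>" "blueprint \<alpha>" using curv_bp[OF curv_app1.hyps(1)] by simp_all
  have le: "\<alpha> \<subseteq>\<^sub>m \<beta>" using curv_le[OF curv_app1.hyps(1)] .
  show ?case
  proof (intro allI impI)
    fix a b assume a: "a \<in> dom (app \<phi> \<alpha> \<gamma>)" and b: "b \<in> dom (app \<phi> \<alpha> \<gamma>)"
      and ab: "strict_prefix a b" and eq: "app \<phi> \<alpha> \<gamma> a = app \<phi> \<alpha> \<gamma> b"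
    obtain sa where sa: "app \<phi> \<alpha> \<gamma> a = Some sa" using a by auto
    obtain sb where sb: "app \<phi> \<alpha> \<gamma> b = Some sb" using b by auto
    show "\<exists>z. (z = contr (app \<phi> \<alpha> \<gamma>) a b \<or> curv 1 (contr (app \<phi> \<alpha> \<gamma>) a b) z) \<and> up z (app \<phi> \<beta> \<gamma>)"
    proof (cases "a = []")
      case True
      then have sbA: "sb = At \<phi>" using sa sb eq by simp
      have "b \<noteq> []" using ab True by auto
      from app_dom_ne[OF this sb] show ?thesis
      proof (elim disjE exE conjE)
        fix e assume e: "b = 1 # e" "\<alpha> e = Some sb"
        have be: "\<beta> e = Some sb" using map_le_Some[OF le e(2)] .
        have u: "up (contr (app \<phi> \<beta> \<gamma>) [] (1 # e)) (app \<phi> \<beta> \<gamma>)"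
          using bpy be sbA by (intro up_contr) (auto simp: strict_prefix_def)
        have c1: "contr (app \<phi> \<beta> \<gamma>) [] (1 # e) = restr \<beta> e" by (simp add: contr_Nil)
        have c2: "contr (app \<phi> \<alpha> \<gamma>) a b = restr \<alpha> e" unfolding True e(1) by (simp add: contr_Nil)
        have "restr \<alpha> e = restr \<beta> e \<or> curv 1 (restr \<alpha> e) (restr \<beta> e)"
          using curv_restr[OF curv_app1.hyps(1)] e(2) by blast
        moreover have "up (restr \<beta> e) (app \<phi> \<beta> \<gamma>)" using u c1 by simp
        ultimately show ?thesis unfolding c2 by (intro exI[of _ "restr \<beta> e"]) metis
      next
        fix e assume e: "b = 2 # e" "\<gamma> e = Some sb"
        have u: "up (contr (app \<phi> \<beta> \<gamma>) [] (2 # e)) (app \<phi> \<beta> \<gamma>)"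
          using bpy e(2) sbA by (intro up_contr) (auto simp: strict_prefix_def)
        have c1: "contr (app \<phi> \<beta> \<gamma>) [] (2 # e) = restr \<gamma> e" by (simp add: contr_Nil)
        have c2: "contr (app \<phi> \<alpha> \<gamma>) a b = restr \<gamma> e" unfolding True e(1) by (simp add: contr_Nil)
        have "up (restr \<gamma> e) (app \<phi> \<beta> \<gamma>)" using u c1 by simp
        then show ?thesis unfolding c2 by (intro exI[of _ "restr \<gamma> e"] conjI disjI1 refl)
      qed
    next
      case False
      from app_dom_ne[OF False sa] show ?thesis
      proof (elim disjE exE conjE)
        fix a' assume a': "a = 1 # a'" "\<alpha> a' = Some sa"
        have sp: "strict_prefix (1 # a') b" using ab unfolding a'(1) .
        obtain b' where b': "b = 1 # b'" "strict_prefix a' b'" using strict_prefix_Cons_ex[OF sp] by metis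
        have sb': "\<alpha> b' = Some sb" using sb unfolding b'(1) app_1'[of \<phi> \<alpha> \<gamma>] .
        have eq1: "\<alpha> a' = \<alpha> b'" using eq unfolding a'(1) b'(1) app_1'[of \<phi> \<alpha> \<gamma>] .
        have da: "a' \<in> dom \<alpha>" using a'(2) by (simp add: domIff)
        have db: "b' \<in> dom \<alpha>" using sb' by (simp add: domIff)
        obtain z1 where z1: "z1 = contr \<alpha> a' b' \<or> curv 1 (contr \<alpha> a' b') z1" "up z1 \<beta>"
          using curv_app1.IH[rule_format, OF da db b'(2) eq1] by blast
        have cx: "contr (app \<phi> \<alpha> \<gamma>) a b = app \<phi> (contr \<alpha> a' b') \<gamma>"
          unfolding a'(1) b'(1) by (rule contr_app1)
        have upz: "up (app \<phi> z1 \<gamma>) (app \<phi> \<beta> \<gamma>)"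
          by (rule up_app1[OF z1(2) curv_app1.hyps(3,4,5)])
        have c1: "contr \<alpha> a' b' \<noteq> Map.empty" using contr_ne[of \<alpha> b' a'] sb' by simp
        from z1(1) show ?thesis
        proof
          assume "z1 = contr \<alpha> a' b'"
          then show ?thesis using upz unfolding cx by (intro exI[of _ "app \<phi> z1 \<gamma>"]) simp
        next
          assume cz: "curv 1 (contr \<alpha> a' b') z1"
          have "z1 \<noteq> Map.empty" using curv_le[OF cz] c1 by (auto simp: map_le_def)
          then have "curv 1 (app \<phi> (contr \<alpha> a' b') \<gamma>) (app \<phi> z1 \<gamma>)"
            using cz c1 curv_app1.hyps(4,5) by (intro curv.curv_app1)
          then show ?thesis using upz unfolding cx by (intro exI[of _ "app \<phi> z1 \<gamma>"] conjI disjI2)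
        qed
      next
        fix a' assume a': "a = 2 # a'" "\<gamma> a' = Some sa"
        have sp: "strict_prefix (2 # a') b" using ab unfolding a'(1) .
        obtain b' where b': "b = 2 # b'" "strict_prefix a' b'" using strict_prefix_Cons_ex[OF sp] by metis
        have sb': "\<gamma> b' = Some sb" using sb unfolding b'(1) app_2'[of \<phi> \<alpha> \<gamma>] .
        have eq1: "\<gamma> a' = \<gamma> b'" using eq unfolding a'(1) b'(1) app_2'[of \<phi> \<alpha> \<gamma>] .
        have cx: "contr (app \<phi> \<alpha> \<gamma>) a b = app \<phi> \<alpha> (contr \<gamma> a' b')"
          unfolding a'(1) b'(1) by (rule contr_app2)
        have c1: "contr \<gamma> a' b' \<noteq> Map.empty" using contr_ne[of \<gamma> b' a'] sb' by simp
        have cbp: "blueprint (contr \<gamma> a' b')" using blueprint_contr[OF curv_app1.hyps(4)] a'(2) sb'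
          by (auto simp: domIff)
        have uc: "up (contr \<gamma> a' b') \<gamma>" using curv_app1.hyps(4) a'(2) sb' b'(2) eq1
          by (intro up_contr) (auto simp: domIff)
        have "curv 1 (app \<phi> \<alpha> (contr \<gamma> a' b')) (app \<phi> \<beta> (contr \<gamma> a' b'))"
          using curv_app1.hyps(1,2,3) cbp c1 by (rule curv.curv_app1)
        moreover have "up (app \<phi> \<beta> (contr \<gamma> a' b')) (app \<phi> \<beta> \<gamma>)"
          by (rule up_app2[OF uc curv_app1.hyps(5) bpb(1) curv_app1.hyps(3)])
        ultimately show ?thesis unfolding cx by (intro exI[of _ "app \<phi> \<beta> (contr \<gamma> a' b')"] conjI disjI2)
      qed
    qed
  qed
next
  case (curv_app2 \<alpha> \<beta> \<gamma> \<phi>)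
  have cv: "curv 1 (app \<phi> \<gamma> \<alpha>) (app \<phi> \<gamma> \<beta>)" using curv_app2.hyps by (rule curv.curv_app2)
  have bpy: "blueprint (app \<phi> \<gamma> \<beta>)" using curv_bp[OF cv] by simp
  have bpb: "blueprint \<beta>" "blueprint \<alpha>" using curv_bp[OF curv_app2.hyps(1)] by simp_all
  have le: "\<alpha> \<subseteq>\<^sub>m \<beta>" using curv_le[OF curv_app2.hyps(1)] .
  show ?case
  proof (intro allI impI)
    fix a b assume a: "a \<in> dom (app \<phi> \<gamma> \<alpha>)" and b: "b \<in> dom (app \<phi> \<gamma> \<alpha>)"
      and ab: "strict_prefix a b" and eq: "app \<phi> \<gamma> \<alpha> a = app \<phi> \<gamma> \<alpha> b"
    obtain sa where sa: "app \<phi> \<gamma> \<alpha> a = Some sa" using a by auto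
    obtain sb where sb: "app \<phi> \<gamma> \<alpha> b = Some sb" using b by auto
    show "\<exists>z. (z = contr (app \<phi> \<gamma> \<alpha>) a b \<or> curv 1 (contr (app \<phi> \<gamma> \<alpha>) a b) z) \<and> up z (app \<phi> \<gamma> \<beta>)"
    proof (cases "a = []")
      case True
      then have sbA: "sb = At \<phi>" using sa sb eq by simp
      have "b \<noteq> []" using ab True by auto
      from app_dom_ne[OF this sb] show ?thesis
      proof (elim disjE exE conjE)
        fix e assume e: "b = 2 # e" "\<alpha> e = Some sb"
        have be: "\<beta> e = Some sb" using map_le_Some[OF le e(2)] .
        have u: "up (contr (app \<phi> \<gamma> \<beta>) [] (2 # e)) (app \<phi> \<gamma> \<beta>)"
          using bpy be sbA by (intro up_contr) (auto simp: strict_prefix_def)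
        have c1: "contr (app \<phi> \<gamma> \<beta>) [] (2 # e) = restr \<beta> e" by (simp add: contr_Nil)
        have c2: "contr (app \<phi> \<gamma> \<alpha>) a b = restr \<alpha> e" unfolding True e(1) by (simp add: contr_Nil)
        have "restr \<alpha> e = restr \<beta> e \<or> curv 1 (restr \<alpha> e) (restr \<beta> e)"
          using curv_restr[OF curv_app2.hyps(1)] e(2) by blast
        moreover have "up (restr \<beta> e) (app \<phi> \<gamma> \<beta>)" using u c1 by simp
        ultimately show ?thesis unfolding c2 by (intro exI[of _ "restr \<beta> e"]) metis
      next
        fix e assume e: "b = 1 # e" "\<gamma> e = Some sb"
        have u: "up (contr (app \<phi> \<gamma> \<beta>) [] (1 # e)) (app \<phi> \<gamma> \<beta>)"
          using bpy e(2) sbA by (intro up_contr) (auto simp: strict_prefix_def)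
        have c1: "contr (app \<phi> \<gamma> \<beta>) [] (1 # e) = restr \<gamma> e" by (simp add: contr_Nil)
        have c2: "contr (app \<phi> \<gamma> \<alpha>) a b = restr \<gamma> e" unfolding True e(1) by (simp add: contr_Nil)
        have "up (restr \<gamma> e) (app \<phi> \<gamma> \<beta>)" using u c1 by simp
        then show ?thesis unfolding c2 by (intro exI[of _ "restr \<gamma> e"] conjI disjI1 refl)
      qed
    next
      case False
      from app_dom_ne[OF False sa] show ?thesis
      proof (elim disjE exE conjE)
        fix a' assume a': "a = 2 # a'" "\<alpha> a' = Some sa"
        have sp: "strict_prefix (2 # a') b" using ab unfolding a'(1) .
        obtain b' where b': "b = 2 # b'" "strict_prefix a' b'" using strict_prefix_Cons_ex[OF sp] by metis
        have sb': "\<alpha> b' = Some sb" using sb unfolding b'(1) app_2'[of \<phi> \<gamma> \<alpha>] .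
        have eq1: "\<alpha> a' = \<alpha> b'" using eq unfolding a'(1) b'(1) app_2'[of \<phi> \<gamma> \<alpha>] .
        have da: "a' \<in> dom \<alpha>" using a'(2) by (simp add: domIff)
        have db: "b' \<in> dom \<alpha>" using sb' by (simp add: domIff)
        obtain z1 where z1: "z1 = contr \<alpha> a' b' \<or> curv 1 (contr \<alpha> a' b') z1" "up z1 \<beta>"
          using curv_app2.IH[rule_format, OF da db b'(2) eq1] by blast
        have cx: "contr (app \<phi> \<gamma> \<alpha>) a b = app \<phi> \<gamma> (contr \<alpha> a' b')"
          unfolding a'(1) b'(1) by (rule contr_app2)
        have upz: "up (app \<phi> \<gamma> z1) (app \<phi> \<gamma> \<beta>)"
          by (rule up_app2[OF z1(2) curv_app2.hyps(3,4,5)])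
        have c1: "contr \<alpha> a' b' \<noteq> Map.empty" using contr_ne[of \<alpha> b' a'] sb' by simp
        from z1(1) show ?thesis
        proof
          assume "z1 = contr \<alpha> a' b'"
          then show ?thesis using upz unfolding cx by (intro exI[of _ "app \<phi> \<gamma> z1"]) simp
        next
          assume cz: "curv 1 (contr \<alpha> a' b') z1"
          have "z1 \<noteq> Map.empty" using curv_le[OF cz] c1 by (auto simp: map_le_def)
          then have "curv 1 (app \<phi> \<gamma> (contr \<alpha> a' b')) (app \<phi> \<gamma> z1)"
            using cz c1 curv_app2.hyps(4,5) by (intro curv.curv_app2)
          then show ?thesis using upz unfolding cx by (intro exI[of _ "app \<phi> \<gamma> z1"] conjI disjI2)
        qed
      next
        fix a' assume a': "a = 1 # a'" "\<gamma> a' = Some sa"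
        have sp: "strict_prefix (1 # a') b" using ab unfolding a'(1) .
        obtain b' where b': "b = 1 # b'" "strict_prefix a' b'" using strict_prefix_Cons_ex[OF sp] by metis
        have sb': "\<gamma> b' = Some sb" using sb unfolding b'(1) app_1'[of \<phi> \<gamma> \<alpha>] .
        have eq1: "\<gamma> a' = \<gamma> b'" using eq unfolding a'(1) b'(1) app_1'[of \<phi> \<gamma> \<alpha>] .
        have cx: "contr (app \<phi> \<gamma> \<alpha>) a b = app \<phi> (contr \<gamma> a' b') \<alpha>"
          unfolding a'(1) b'(1) by (rule contr_app1)
        have c1: "contr \<gamma> a' b' \<noteq> Map.empty" using contr_ne[of \<gamma> b' a'] sb' by simp
        have cbp: "blueprint (contr \<gamma> a' b')" using blueprint_contr[OF curv_app2.hyps(4)] a'(2) sb'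
          by (auto simp: domIff)
        have uc: "up (contr \<gamma> a' b') \<gamma>" using curv_app2.hyps(4) a'(2) sb' b'(2) eq1
          by (intro up_contr) (auto simp: domIff)
        have "curv 1 (app \<phi> (contr \<gamma> a' b') \<alpha>) (app \<phi> (contr \<gamma> a' b') \<beta>)"
          using curv_app2.hyps(1,2,3) cbp c1 by (rule curv.curv_app2)
        moreover have "up (app \<phi> (contr \<gamma> a' b') \<beta>) (app \<phi> \<gamma> \<beta>)"
          by (rule up_app1[OF uc curv_app2.hyps(5) bpb(1) curv_app2.hyps(3)])
        ultimately show ?thesis unfolding cx by (intro exI[of _ "app \<phi> (contr \<gamma> a' b') \<beta>"] conjI disjI2)
      qed
    qed
  qed
next
  case (curv_star as als bs bes c \<gamma>)
  define X where "X = star as als"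
  define Y where "Y = star bs bes"
  have lx: "length als = length as" using curv_star.hyps(2) by simp
  have ly: "length bes = length bs" using curv_star.hyps(3) by simp
  have pa: "pw_incomp as" using pw_incomp_snoc(1)[OF curv_star.hyps(6)] .
  have pb: "pw_incomp bs" using pw_incomp_snoc(1)[OF curv_star.hyps(7)] .
  have ex: "star (as @ [c]) (als @ [\<gamma>]) = graft X c \<gamma>"
    using star_snoc[OF curv_star.hyps(6) lx] X_def by simp
  have ey: "star (bs @ [c]) (bes @ [\<gamma>]) = graft Y c \<gamma>"
    using star_snoc[OF curv_star.hyps(7) ly] Y_def by simp
  have cXY: "curv 1 X Y" using curv_star.hyps(1) X_def Y_def by simp
  have bX: "blueprint X" "blueprint Y" using curv_bp[OF cXY] by simp_all
  have regX: "\<forall>d\<in>dom X. \<exists>e\<in>set as. prefix e d" using star_dom_region[OF pa lx] X_def by simp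
  have regY: "\<forall>d\<in>dom Y. \<exists>e\<in>set bs. prefix e d" using star_dom_region[OF pb ly] Y_def by simp
  have IH: "\<forall>a b. a \<in> dom X \<longrightarrow> b \<in> dom X \<longrightarrow> strict_prefix a b \<longrightarrow> X a = X b \<longrightarrow>
     (\<exists>z. (z = contr X a b \<or> curv 1 (contr X a b) z) \<and> up z Y)"
    using curv_star.IH X_def Y_def by simp
  show ?case unfolding ex ey
  proof (intro allI impI)
    fix a b assume a: "a \<in> dom (graft X c \<gamma>)" and b: "b \<in> dom (graft X c \<gamma>)"
      and ab: "strict_prefix a b" and eq: "graft X c \<gamma> a = graft X c \<gamma> b"
    obtain sa where sa: "graft X c \<gamma> a = Some sa" using a by auto
    obtain sb where sb: "graft X c \<gamma> b = Some sb" using b by auto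
    show "\<exists>z. (z = contr (graft X c \<gamma>) a b \<or> curv 1 (contr (graft X c \<gamma>) a b) z) \<and> up z (graft Y c \<gamma>)"
    proof (cases "prefix c a")
      case True
      then obtain a' where a': "a = c @ a'" by (auto simp: prefix_def)
      obtain b' where b': "b = c @ b'" "strict_prefix a' b'"
        using strict_prefix_append_ex[of c a' b] ab a' by auto
      have ga: "\<gamma> a' = Some sa" using sa a' by (simp add: graft_at)
      have gb: "\<gamma> b' = Some sb" using sb b'(1) by (simp add: graft_at)
      have eq': "\<gamma> a' = \<gamma> b'" using eq a' b'(1) by (simp add: graft_at)
      define g' where "g' = contr \<gamma> a' b'"
      have cx: "contr (graft X c \<gamma>) a b = graft X c g'"
        unfolding a' b'(1) g'_def by (simp add: contr_append)
      have g'bp: "blueprint g'" using blueprint_contr[OF curv_star.hyps(10)] ga gb g'_def by (auto simp: domIff)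
      have g'ne: "g' \<noteq> Map.empty" using contr_ne[of \<gamma> b' a'] gb g'_def by simp
      have ug: "up g' \<gamma>" unfolding g'_def using curv_star.hyps(10) ga gb b'(2) eq'
        by (intro up_contr) (auto simp: domIff)
      have "curv 1 (star (as @ [c]) (als @ [g'])) (star (bs @ [c]) (bes @ [g']))"
        using curv_star.hyps(1-9) g'bp g'ne by (rule curv.curv_star)
      moreover have "star (as @ [c]) (als @ [g']) = graft X c g'"
        using star_snoc[OF curv_star.hyps(6) lx] X_def by simp
      moreover have "star (bs @ [c]) (bes @ [g']) = graft Y c g'"
        using star_snoc[OF curv_star.hyps(7) ly] Y_def by simp
      ultimately have cv: "curv 1 (graft X c g') (graft Y c g')" by simp
      have "up (star (bs @ [c]) ((bes @ [\<gamma>])[length bs := g'])) (star (bs @ [c]) ((bes @ [\<gamma>])[length bs := \<gamma>]))"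
      proof (rule up_star_entry[OF curv_star.hyps(7,9)])
        show "length (bes @ [\<gamma>]) = length (bs @ [c])" using ly by simp
        show "\<forall>x\<in>set (bes @ [\<gamma>]). blueprint x" using curv_star.hyps(5,10) by simp
        show "length bs < length (bs @ [c])" by simp
        show "up g' \<gamma>" by (rule ug)
        show "\<gamma> \<noteq> Map.empty" by (rule curv_star.hyps(11))
      qed
      moreover have "(bes @ [\<gamma>])[length bs := g'] = bes @ [g']" "(bes @ [\<gamma>])[length bs := \<gamma>] = bes @ [\<gamma>]"
        using ly by (simp_all add: list_update_append)
      ultimately have "up (star (bs @ [c]) (bes @ [g'])) (star (bs @ [c]) (bes @ [\<gamma>]))" by simp
      then have upz: "up (graft Y c g') (graft Y c \<gamma>)"
        using star_snoc[OF curv_star.hyps(7) ly] Y_def by simp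
      show ?thesis unfolding cx using cv upz by (intro exI[of _ "graft Y c g'"] conjI disjI2)
    next
      case False
      have Xa: "X a = Some sa" using sa False by (simp add: graft_def)
      obtain e where e: "e \<in> set as" "prefix e a" using regX Xa by (auto simp: domIff)
      have inca: "\<not> prefix c a \<and> \<not> prefix a c" using region_incomp[OF curv_star.hyps(6) e] .
      have pab: "prefix a b" using ab by (simp add: strict_prefix_def)
      have eb: "prefix e b" using e(2) pab by (rule prefix_order.order_trans)
      have incb: "\<not> prefix c b \<and> \<not> prefix b c" using region_incomp[OF curv_star.hyps(6) e(1) eb] .
      have Xb: "X b = Some sb" using sb incb by (simp add: graft_def)
      have eqX: "X a = X b" using eq inca incb by (simp add: graft_def)
      have cx: "contr (graft X c \<gamma>) a b = graft (contr X a b) c \<gamma>"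
        using graft_out_contr[of c a b X \<gamma>] inca incb by simp
      have da: "a \<in> dom X" using Xa by (simp add: domIff)
      have db: "b \<in> dom X" using Xb by (simp add: domIff)
      obtain z' where z': "z' = contr X a b \<or> curv 1 (contr X a b) z'" "up z' Y"
        using IH[rule_format, OF da db ab eqX] by blast
      have upz: "up (graft z' c \<gamma>) (graft Y c \<gamma>)"
        by (rule up_graft_out[OF z'(2) regY curv_star.hyps(7,9,10)])
      from z'(1) show ?thesis
      proof
        assume "z' = contr X a b"
        then show ?thesis unfolding cx using upz by (intro exI[of _ "graft z' c \<gamma>"]) simp
      next
        assume cz: "curv 1 (contr X a b) z'"
        define W where "W = contr X a b"
        have uW: "up W X" unfolding W_def using bX(1) da db ab eqX by (rule up_contr)
        have bW: "blueprint W" using up_bp[OF uW] by simp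
        have bz: "blueprint z'" using up_bp[OF z'(2)] by simp
        have regW: "\<forall>d\<in>dom W. \<exists>e\<in>set as. prefix e d"
        proof
          fix d assume "d \<in> dom W"
          then obtain e where "e \<in> dom X" "prefix e d" using up_dom[OF uW] by blast
          moreover obtain e' where "e' \<in> set as" "prefix e' e" using regX calculation(1) by blast
          ultimately show "\<exists>e\<in>set as. prefix e d" using prefix_order.order_trans by blast
        qed
        have regZ: "\<forall>d\<in>dom z'. \<exists>e\<in>set bs. prefix e d"
        proof
          fix d assume "d \<in> dom z'"
          then obtain e where "e \<in> dom Y" "prefix e d" using up_dom[OF z'(2)] by blast
          moreover obtain e' where "e' \<in> set bs" "prefix e' e" using regY calculation(1) by blast
          ultimately show "\<exists>e\<in>set bs. prefix e d" using prefix_order.order_trans by blast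
        qed
        have rW: "W = star as (map (restr W) as)" using star_repr[OF regW] .
        have rZ: "z' = star bs (map (restr z') bs)" using star_repr[OF regZ] .
        have "curv 1 (star as (map (restr W) as)) (star bs (map (restr z') bs))"
          using cz rW rZ W_def by simp
        then have "curv 1 (star (as @ [c]) (map (restr W) as @ [\<gamma>])) (star (bs @ [c]) (map (restr z') bs @ [\<gamma>]))"
        proof (rule curv.curv_star)
          show "length as = length (map (restr W) as)" "length bs = length (map (restr z') bs)" by simp_all
          show "\<forall>x\<in>set (map (restr W) as). blueprint x" using blueprint_restr[OF bW] by simp
          show "\<forall>x\<in>set (map (restr z') bs). blueprint x" using blueprint_restr[OF bz] by simp
        qed (use curv_star.hyps(6-11) in auto)
        moreover have "star (as @ [c]) (map (restr W) as @ [\<gamma>]) = graft W c \<gamma>"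
          using star_snoc[OF curv_star.hyps(6), of "map (restr W) as" \<gamma>] rW by simp
        moreover have "star (bs @ [c]) (map (restr z') bs @ [\<gamma>]) = graft z' c \<gamma>"
          using star_snoc[OF curv_star.hyps(7), of "map (restr z') bs" \<gamma>] rZ by simp
        ultimately have "curv 1 (graft W c \<gamma>) (graft z' c \<gamma>)" by simp
        then show ?thesis unfolding cx W_def[symmetric] using upz by (intro exI[of _ "graft z' c \<gamma>"] conjI disjI2)
      qed
    qed
  qed
qed

lemma strip:
  assumes "up \<alpha> \<beta>" "eqv \<beta> \<beta>1 \<or> curv 1 \<beta> \<beta>1"
  shows "\<exists>\<alpha>1. (\<alpha>1 = \<alpha> \<or> eqv \<alpha> \<alpha>1 \<or> curv 1 \<alpha> \<alpha>1) \<and> up \<alpha>1 \<beta>1"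
  using assms
proof (induction arbitrary: \<beta>1 rule: up.induct)
  case (up_refl \<beta>)
  have "blueprint \<beta>1" using up_refl.prems eqv_bp curv_bp by blast
  then have "up \<beta>1 \<beta>1" by (rule up.up_refl)
  then show ?case using up_refl.prems by blast
next
  case (up_step \<beta> a b)
  have ab: "a \<in> dom \<beta>" "b \<in> dom \<beta>" "strict_prefix a b" "\<beta> a = \<beta> b" using up_step.hyps by auto
  from up_step.prems show ?case
  proof
    assume e: "eqv \<beta> \<beta>1"
    obtain z where "eqv (contr \<beta> a b) z" "up z \<beta>1"
      using eqv_transport[OF e, rule_format, OF ab] by blast
    then show ?thesis unfolding contr_def by blast
  next
    assume c: "curv 1 \<beta> \<beta>1"
    obtain z where "z = contr \<beta> a b \<or> curv 1 (contr \<beta> a b) z" "up z \<beta>1"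
      using curv_contr[OF c, rule_format, OF ab] by blast
    then show ?thesis unfolding contr_def by blast
  qed
next
  case (up_trans x y z)
  obtain y1 where y1: "y1 = y \<or> eqv y y1 \<or> curv 1 y y1" "up y1 \<beta>1"
    using up_trans.IH(2)[OF up_trans.prems] by blast
  from y1(1) show ?case
  proof
    assume "y1 = y"
    then have "up x \<beta>1" using up_trans.hyps(1) y1(2) by (simp add: up.up_trans)
    then show ?thesis by blast
  next
    assume "eqv y y1 \<or> curv 1 y y1"
    then obtain x1 where "x1 = x \<or> eqv x x1 \<or> curv 1 x x1" "up x1 y1"
      using up_trans.IH(1) by blast
    then show ?thesis using y1(2) up.up_trans by blast
  qed
qed

lemma main:
  assumes "(\<lambda>x y. eqv x y \<or> curv 1 x y)\<^sup>*\<^sup>* \<beta> \<beta>'" "up \<alpha> \<beta>"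
  shows "\<exists>\<alpha>'. (\<lambda>x y. eqv x y \<or> curv 1 x y)\<^sup>*\<^sup>* \<alpha> \<alpha>' \<and> up \<alpha>' \<beta>'"
  using assms(1)
proof (induction rule: rtranclp_induct)
  case base
  then show ?case using assms(2) by blast
next
  case (step y z)
  obtain \<alpha>k where k: "(\<lambda>x y. eqv x y \<or> curv 1 x y)\<^sup>*\<^sup>* \<alpha> \<alpha>k" "up \<alpha>k y" using step.IH by blast
  obtain \<alpha>1 where a1: "\<alpha>1 = \<alpha>k \<or> eqv \<alpha>k \<alpha>1 \<or> curv 1 \<alpha>k \<alpha>1" "up \<alpha>1 z"
    using strip[OF k(2) step.hyps(2)] by blast
  have "(\<lambda>x y. eqv x y \<or> curv 1 x y)\<^sup>*\<^sup>* \<alpha> \<alpha>1"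
    using a1(1)
  proof
    assume "\<alpha>1 = \<alpha>k" then show ?thesis using k(1) by simp
  next
    assume "eqv \<alpha>k \<alpha>1 \<or> curv 1 \<alpha>k \<alpha>1"
    then show ?thesis using k(1) by (rule rtranclp.rtrancl_into_rtrancl[rotated])
  qed
  then show ?case using a1(2) by blast
qed

theorem lemma4p10:
  fixes \<alpha> \<beta> \<beta>' :: "'f ptree"
  assumes "blueprint \<alpha>" and "blueprint \<beta>" and "blueprint \<beta>'"
    and "up \<alpha> \<beta>" and "sq 1 \<beta> \<beta>'"
  shows "\<exists>\<alpha>'. blueprint \<alpha>' \<and> sq 1 \<alpha> \<alpha>' \<and> up \<alpha>' \<beta>'"
proof -
  obtain \<alpha>' where a: "(\<lambda>x y. eqv x y \<or> curv 1 x y)\<^sup>*\<^sup>* \<alpha> \<alpha>'" "up \<alpha>' \<beta>'"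
    using main[OF assms(5)[unfolded sq_def] assms(4)] by blast
  have "blueprint \<alpha>'" using up_bp[OF a(2)] by simp
  then show ?thesis using a unfolding sq_def by blast
qed

end
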